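(* No semisimple representation $\Gamma\to\mathrm{SL}_4\mathbb{R}$ is irreducible. More precisely, every semisimple representation $\rho:\Gamma\to\mathrm{SL}_4\mathbb{R}$ preserves a line or a plane of $\mathbb{R}^4$, and $$X(\Gamma,\mathrm{SL}_4\mathbb{R})=i_*\big(\mathrm{Rep}^{SS}(\Gamma,\mathrm{SL}_3\mathbb{R})\big)/\mathrm{SL}_4\mathbb{R}\ \cup\ j_*\big(\mathrm{Rep}^{SS}(\Gamma,\mathrm{SL}_2\mathbb{R}\times\mathrm{SL}_2\mathbb{R})\big)/\mathrm{SL}_4\mathbb{R},$$ i.e. every semisimple representation is conjugate either to $\rho'\oplus 1$ with $\rho':\Gamma\to\mathrm{SL}_3\mathbb{R}$ semisimple, or to $\rho_1\oplus\rho_2$ with $\rho_1,\rho_2:\Gamma\to\mathrm{SL}_2\mathbb{R}$ semisimple.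
   Context: $\Gamma=\langle a,b\mid a^3=b^3=(ab)^3=1\rangle$ is the orbifold fundamental group of $S^2(3,3,3)$. $\mathrm{Rep}^{SS}(\Gamma,H)$ denotes semisimple representations $\Gamma\to H$; $i:\mathrm{SL}_3\mathbb{R}\hookrightarrow\mathrm{SL}_4\mathbb{R}$, $A\mapsto A\oplus 1$, and $j:\mathrm{SL}_2\mathbb{R}\times\mathrm{SL}_2\mathbb{R}\hookrightarrow\mathrm{SL}_4\mathbb{R}$, $(A,B)\mapsto A\oplus B$, are the natural inclusions and the star denotes postcomposition. $X(\Gamma,\mathrm{SL}_4\mathbb{R})$ is the real GIT quotient, identified with $\mathrm{Rep}^{SS}(\Gamma,\mathrm{SL}_4\mathbb{R})/\mathrm{SL}_4\mathbb{R}$. *)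

theory Defs
  imports "HOL-Analysis.Analysis"
begin

text \<open>A representation of Gamma = <a,b | a^3 = b^3 = (ab)^3 = 1> into SL_n(R) is determined
  by the images A = rho(a), B = rho(b), subject to the relations and det = 1.\<close>
definition rep_Gamma_SL :: "real^'n^'n \<Rightarrow> real^'n^'n \<Rightarrow> bool" where
  "rep_Gamma_SL A B \<longleftrightarrow> det A = 1 \<and> det B = 1 \<and>
     A ** A ** A = mat 1 \<and> B ** B ** B = mat 1 \<and> (A ** B) ** (A ** B) ** (A ** B) = mat 1"

definition invariant_subspace :: "real^'n^'n \<Rightarrow> real^'n^'n \<Rightarrow> (real^'n) set \<Rightarrow> bool" where
  "invariant_subspace A B V \<longleftrightarrow> subspace V \<and> (\<lambda>v. A *v v) ` V \<subseteq> V \<and> (\<lambda>v. B *v v) ` V \<subseteq> V"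

definition semisimple_rep :: "real^'n^'n \<Rightarrow> real^'n^'n \<Rightarrow> bool" where
  "semisimple_rep A B \<longleftrightarrow> (\<forall>V. invariant_subspace A B V \<longrightarrow>
     (\<exists>W. invariant_subspace A B W \<and> V \<inter> W = {0} \<and> {v + w | v w. v \<in> V \<and> w \<in> W} = UNIV))"

definition irreducible_rep :: "real^'n^'n \<Rightarrow> real^'n^'n \<Rightarrow> bool" where
  "irreducible_rep A B \<longleftrightarrow> (\<forall>V. invariant_subspace A B V \<longrightarrow> V = {0} \<or> V = UNIV)"

definition embed_i :: "real^3^3 \<Rightarrow> real^4^4" where
  "embed_i A = vector [
     vector [A$1$1, A$1$2, A$1$3, 0],
     vector [A$2$1, A$2$2, A$2$3, 0],
     vector [A$3$1, A$3$2, A$3$3, 0],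
     vector [0, 0, 0, 1]]"

definition embed_j :: "real^2^2 \<Rightarrow> real^2^2 \<Rightarrow> real^4^4" where
  "embed_j A B = vector [
     vector [A$1$1, A$1$2, 0, 0],
     vector [A$2$1, A$2$2, 0, 0],
     vector [0, 0, B$1$1, B$1$2],
     vector [0, 0, B$2$1, B$2$2]]"

definition conj_SL :: "real^'n^'n \<Rightarrow> real^'n^'n \<Rightarrow> real^'n^'n" where
  "conj_SL P M = P ** M ** matrix_inv P"

end

theory Submission
  imports Defs
begin

lemma rank_nullity:
  fixes f :: "'a::euclidean_space \<Rightarrow> 'b::euclidean_space"
  assumes lf: "linear f" and S: "subspace S"
  shows "dim {x\<in>S. f x = 0} + dim (f ` S) = dim S"
proof -
  define K where "K = {x\<in>S. f x = 0}"
  define C where "C = {y \<in> S. \<forall>x \<in> K. orthogonal x y}"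
  have sK: "subspace K" unfolding K_def
    using S lf by (auto simp: subspace_def linear_add linear_cmul linear_0)
  have KS: "K \<subseteq> S" by (auto simp: K_def)
  have d1: "dim C + dim K = dim S"
    unfolding C_def by (rule dim_subspace_orthogonal_to_vectors[OF sK S KS])
  have sC: "subspace C" unfolding C_def
    using S by (auto simp: subspace_def orthogonal_clauses)
  have CS: "C \<subseteq> S" by (auto simp: C_def)
  have img: "f ` S = f ` C"
  proof
    show "f ` C \<subseteq> f ` S" using CS by auto
    show "f ` S \<subseteq> f ` C"
    proof
      fix z assume "z \<in> f ` S"
      then obtain x where x: "x \<in> S" "z = f x" by auto
      obtain y w where yw: "x = y + w" "y \<in> span K" "\<And>u. u \<in> span K \<Longrightarrow> orthogonal w u"
        using orthogonal_subspace_decomp_exists[of K x] by metis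
      have yK: "y \<in> K" using yw(2) sK by (metis span_eq_iff)
      have "w = x - y" using yw by simp
      then have wS: "w \<in> S" using x yK KS S by (auto intro: subspace_diff)
      have "w \<in> C" unfolding C_def using wS yw(3) yK
        by (auto simp: orthogonal_commute span_base)
      moreover have "f x = f w" using yw(1) yK lf by (simp add: K_def linear_add)
      ultimately show "z \<in> f ` C" using x by auto
    qed
  qed
  have inj: "inj_on f (span C)"
  proof -
    have "span C = C" using sC by (metis span_eq_iff)
    moreover have "inj_on f C"
    proof (rule inj_onI)
      fix u v assume uv: "u \<in> C" "v \<in> C" "f u = f v"
      then have "u - v \<in> C" using sC by (simp add: subspace_diff)
      moreover have "f (u - v) = 0" using uv lf by (simp add: linear_diff)
      ultimately have "u - v \<in> K" using CS by (auto simp: K_def)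
      with \<open>u - v \<in> C\<close> have "orthogonal (u - v) (u - v)" by (auto simp: C_def)
      then show "u = v" by (simp add: orthogonal_def)
    qed
    ultimately show ?thesis by metis
  qed
  have "dim (f ` C) = dim C" by (rule dim_image_eq[OF lf inj])
  then show ?thesis using d1 img by (simp add: K_def)
qed


lemma dim4: "dim (UNIV :: (real^4) set) = 4" by simp

lemma lin_sub_id: "linear g \<Longrightarrow> linear (\<lambda>x. g x - x)"
  by (simp add: linear_compose_sub linear_id[unfolded id_def])

lemma L1:
  fixes g :: "real^4 \<Rightarrow> real^4"
  assumes "linear g"
  shows "dim {x. g x = x} + dim (range (\<lambda>x. g x - x)) = 4"
proof -
  have "dim {x\<in>UNIV. g x - x = 0} + dim ((\<lambda>x. g x - x) ` UNIV) = dim (UNIV :: (real^4) set)"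
    by (rule rank_nullity[OF lin_sub_id[OF assms] subspace_UNIV])
  then show ?thesis by simp
qed

lemma coh:
  fixes p q :: "real^4 \<Rightarrow> real^4"
  assumes lp: "linear p" and lq: "linear q"
    and cp: "\<And>x. p (p (p x)) = x" and cq: "\<And>x. q (q (q x)) = x"
    and cpq: "\<And>x. p (q (p (q (p (q x))))) = x"
    and big: "dim {x. p x = x} + dim {x. q x = x} + dim {x. p (q x) = x} > 4"
    and D: "{u + w | u w. u \<in> range (\<lambda>x. p x - x) \<and> w \<in> range (\<lambda>x. q x - x)} = UNIV"
  shows "\<exists>v. v \<noteq> 0 \<and> p v = v \<and> q v = v"
proof -
  define c where "c = (\<lambda>x. p (q x))"
  have lc: "linear c" unfolding c_def using lp lq by (simp add: linear_compose[unfolded o_def])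
  have cc: "\<And>x. c (c (c x)) = x" unfolding c_def by (simp add: cpq)
  define KP where "KP = range (\<lambda>x. p x - x)"
  define KQ where "KQ = range (\<lambda>x. q x - x)"
  have sKP: "subspace KP" unfolding KP_def by (rule linear_subspace_image[OF lin_sub_id[OF lp] subspace_UNIV])
  have sKQ: "subspace KQ" unfolding KQ_def by (rule linear_subspace_image[OF lin_sub_id[OF lq] subspace_UNIV])
  define S where "S = KP \<times> KQ"
  have sS: "subspace S" unfolding S_def using sKP sKQ by (rule subspace_Times)
  have dS: "dim S = dim KP + dim KQ" unfolding S_def using sKP sKQ by (rule dim_Times)
  define h where "h = (\<lambda>z. c (c z) + c z + z)"
  have lh: "linear h" unfolding h_def using lc
    by (intro linearI) (simp_all add: linear_add linear_scale algebra_simps)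
  define \<phi> where "\<phi> = (\<lambda>r. h (fst r + p (snd r)))"
  have lphi: "linear \<phi>" unfolding \<phi>_def using lh lp
    by (intro linearI) (simp_all add: linear_add linear_scale algebra_simps)
  have img: "\<phi> ` S = {x. c x = x}"
  proof
    show "\<phi> ` S \<subseteq> {x. c x = x}"
    proof
      fix z assume "z \<in> \<phi> ` S"
      then obtain r where "z = \<phi> r" by auto
      then have "z = h (fst r + p (snd r))" by (simp add: \<phi>_def)
      then show "z \<in> {x. c x = x}" unfolding h_def using lc cc by (simp add: linear_add)
    qed
    show "{x. c x = x} \<subseteq> \<phi> ` S"
    proof
      fix x assume "x \<in> {x. c x = x}"
      then have cx: "c x = x" by simp
      define z where "z = (1/3) *\<^sub>R x"
      have cz: "c z = z" unfolding z_def using lc cx by (simp add: linear_scale)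
      have "h z = z + z + z" using cz by (simp add: h_def)
      also have "\<dots> = (1/3 + 1/3 + 1/3) *\<^sub>R x" by (simp only: z_def scaleR_add_left)
      also have "\<dots> = x" by simp
      finally have hz: "h z = x" .
      have "p (p z) \<in> UNIV" by simp
      then obtain u w where uw: "p (p z) = u + w" "u \<in> KP" "w \<in> KQ" using D unfolding KP_def KQ_def by blast
      have pu: "p u \<in> KP"
      proof -
        obtain t where "u = p t - t" using uw(2) unfolding KP_def by auto
        then have "p u = p (p t) - p t" using lp by (simp add: linear_diff)
        then show ?thesis unfolding KP_def by auto
      qed
      have "p (p (p z)) = p u + p w" using uw(1) lp by (simp add: linear_add)
      then have "z = p u + p w" using cp by simp
      then have "\<phi> (p u, w) = x" unfolding \<phi>_def using hz by simp
      moreover have "(p u, w) \<in> S" unfolding S_def using pu uw(3) by simp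
      ultimately show "x \<in> \<phi> ` S" by (metis image_eqI)
    qed
  qed
  have rn1: "dim {s\<in>S. \<phi> s = 0} + dim (\<phi> ` S) = dim S" by (rule rank_nullity[OF lphi sS])
  define \<psi> where "\<psi> = (\<lambda>v. (p v - v, q v - v))"
  have lpsi: "linear \<psi>" unfolding \<psi>_def using lp lq
    by (intro linearI) (simp_all add: linear_add linear_scale algebra_simps)
  have sub: "range \<psi> \<subseteq> {s\<in>S. \<phi> s = 0}"
  proof
    fix s assume "s \<in> range \<psi>"
    then obtain v where v: "s = \<psi> v" by auto
    have "s \<in> S" unfolding v \<psi>_def S_def KP_def KQ_def by auto
    moreover have "\<phi> s = 0"
    proof -
      have "fst s + p (snd s) = c v - v" unfolding v \<psi>_def c_def using lp by (simp add: linear_diff)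
      then have "\<phi> s = h (c v - v)" by (simp add: \<phi>_def)
      also have "\<dots> = 0" unfolding h_def using lc cc by (simp add: linear_diff)
      finally show ?thesis .
    qed
    ultimately show "s \<in> {s\<in>S. \<phi> s = 0}" by simp
  qed
  have rn2: "dim {v\<in>UNIV. \<psi> v = 0} + dim (\<psi> ` UNIV) = dim (UNIV :: (real^4) set)"
    by (rule rank_nullity[OF lpsi subspace_UNIV])
  have "dim (range \<psi>) \<le> dim {s\<in>S. \<phi> s = 0}" by (rule dim_subset[OF sub])
  moreover have "dim {s\<in>S. \<phi> s = 0} + dim {x. p (q x) = x} = dim S" using rn1 img by (simp add: c_def)
  moreover have "dim {v. \<psi> v = 0} + dim (range \<psi>) = 4" using rn2 by simp
  moreover have "dim KP + dim {x. p x = x} = 4" using L1[OF lp] unfolding KP_def by simp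
  moreover have "dim KQ + dim {x. q x = x} = 4" using L1[OF lq] unfolding KQ_def by simp
  ultimately have "dim {v. \<psi> v = 0} \<noteq> 0"
    using dS big by linarith
  then have "\<not> {v. \<psi> v = 0} \<subseteq> {0}" by (metis dim_eq_0)
  then obtain v where "\<psi> v = 0" "v \<noteq> 0" by blast
  then show ?thesis unfolding \<psi>_def by (auto simp: zero_prod_def)
qed


lemma span2_inv:
  fixes g :: "real^4 \<Rightarrow> real^4"
  assumes lg: "linear g" and gg: "g (g u) \<in> span {u, g u}"
  shows "g ` span {u, g u} \<subseteq> span {u, g u}"
proof -
  have "g ` span {u, g u} = span (g ` {u, g u})" using linear_span_image[OF lg, of "{u, g u}"] by simp
  also have "\<dots> \<subseteq> span {u, g u}"
    using gg by (intro span_minimal) (auto intro: span_base)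
  finally show ?thesis .
qed

lemma span2_proper:
  fixes u v :: "real^4"
  assumes "u \<noteq> 0"
  shows "span {u, v} \<noteq> {0}" "span {u, v} \<noteq> UNIV"
proof -
  show "span {u, v} \<noteq> {0}" using assms span_base[of u "{u,v}"] by auto
  have "dim (span {u, v}) \<le> card {u, v}" by (rule dim_le_card) auto
  also have "\<dots> \<le> 2" by (simp add: card_insert_le_m1)
  finally have d: "dim (span {u, v}) \<le> 2" .
  show "span {u, v} \<noteq> UNIV"
  proof
    assume "span {u, v} = UNIV"
    then have "dim (span {u, v}) = 4" by simp
    with d show False by simp
  qed
qed

lemma rot:
  fixes g :: "real^4 \<Rightarrow> real^4"
  assumes lg: "linear g" and cg: "\<And>x. g (g (g x)) = x" and nf: "\<And>v. g v = v \<Longrightarrow> v = 0"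
  shows "g (g u) + g u + u = 0"
proof -
  have "g (g (g u) + g u + u) = g (g u) + g u + u" using lg cg by (simp add: linear_add algebra_simps)
  then show ?thesis by (rule nf)
qed

lemma single:
  fixes g :: "real^4 \<Rightarrow> real^4"
  assumes lg: "linear g" and cg: "\<And>x. g (g (g x)) = x"
  shows "\<exists>u. u \<noteq> 0 \<and> g (g u) \<in> span {u, g u}"
proof (cases "\<exists>v. v \<noteq> 0 \<and> g v = v")
  case True
  then obtain v where "v \<noteq> 0" "g v = v" by auto
  then show ?thesis by (intro exI[of _ v]) (auto intro: span_base)
next
  case False
  define u :: "real^4" where "u = axis 1 1"
  have u0: "u \<noteq> 0" by (simp add: u_def)
  have "g (g u) + g u + u = 0" using rot[OF lg cg] False by blast
  then have "g (g u) = (-1) *\<^sub>R u + (-1) *\<^sub>R g u" by (simp add: algebra_simps eq_neg_iff_add_eq_0)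
  also have "\<dots> \<in> span {u, g u}" by (intro span_add span_scale span_base) auto
  finally show ?thesis using u0 by blast
qed


lemma not_eig:
  fixes g :: "real^4 \<Rightarrow> real^4"
  assumes lg: "linear g" and k0: "k \<noteq> 0" and rel: "g (g k) + g k + k = 0"
  shows "g k \<noteq> c *\<^sub>R k"
proof
  assume gk: "g k = c *\<^sub>R k"
  then have "g (g k) = (c * c) *\<^sub>R k" using lg by (simp add: linear_scale)
  with rel gk have "(c * c + c + 1) *\<^sub>R k = 0" by (simp add: algebra_simps)
  moreover have "c * c + c + 1 \<noteq> 0"
  proof -
    have h: "0 \<le> (c + 1/2) * (c + 1/2)" by simp
    have "c * c + c + 1 = (c + 1/2) * (c + 1/2) + 3/4" by (simp add: algebra_simps)
    then show ?thesis using h by linarith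
  qed
  ultimately show False using k0 by simp
qed

lemma dim_span2:
  fixes g :: "real^4 \<Rightarrow> real^4"
  assumes lg: "linear g" and k0: "k \<noteq> 0" and rel: "g (g k) + g k + k = 0"
  shows "dim (span {k, g k}) = 2"
proof -
  have ns: "g k \<notin> span {k}"
    using not_eig[OF lg k0 rel] by (auto simp: span_singleton)
  have ind: "independent {g k, k}"
    by (rule independent_insertI[OF ns]) (simp add: k0)
  have neq: "g k \<noteq> k" using not_eig[OF lg k0 rel, of 1] by simp
  have "dim (span {g k, k}) = card {g k, k}" by (rule dim_span_eq_card_independent[OF ind])
  then show ?thesis using neq by (simp add: insert_commute)
qed

lemma parity:
  fixes g :: "real^4 \<Rightarrow> real^4"
  assumes lg: "linear g" and cg: "\<And>x. g (g (g x)) = x"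
  shows "dim {x. g x = x} \<noteq> 1"
proof
  assume f1: "dim {x. g x = x} = 1"
  define K where "K = range (\<lambda>x. g x - x)"
  have sK: "subspace K" unfolding K_def by (rule linear_subspace_image[OF lin_sub_id[OF lg] subspace_UNIV])
  have dK: "dim K = 3" using L1[OF lg] f1 unfolding K_def by simp
  have kk: "g (g k) + g k + k = 0" if "k \<in> K" for k
  proof -
    from that[unfolded K_def] obtain t where "k = g t - t" by blast
    then show ?thesis using lg cg by (simp add: linear_diff)
  qed
  have gK: "g k \<in> K" if "k \<in> K" for k
  proof -
    from that[unfolded K_def] obtain t where "k = g t - t" by blast
    then have "g k = g (g t) - g t" using lg by (simp add: linear_diff)
    then show ?thesis unfolding K_def by auto
  qed
  have inv: "g ` span {k, g k} \<subseteq> span {k, g k}" if "k \<in> K" for k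
  proof (rule span2_inv[OF lg])
    have "g (g k) = (-1) *\<^sub>R k + (-1) *\<^sub>R g k" using kk[OF that] by (simp add: algebra_simps eq_neg_iff_add_eq_0)
    also have "\<dots> \<in> span {k, g k}" by (intro span_add span_scale span_base) auto
    finally show "g (g k) \<in> span {k, g k}" .
  qed
  have spK: "span {k, g k} \<subseteq> K" if "k \<in> K" for k
    using that gK[OF that] sK by (intro span_minimal) auto
  have "\<not> K \<subseteq> {0}" using dK by (metis dim_eq_0 zero_neq_numeral)
  then obtain w where w: "w \<in> K" "w \<noteq> 0" by auto
  define U1 where "U1 = span {w, g w}"
  have dU1: "dim U1 = 2" unfolding U1_def by (rule dim_span2[OF lg w(2) kk[OF w(1)]])
  have "\<not> K \<subseteq> U1"
  proof
    assume "K \<subseteq> U1"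
    then have "dim K \<le> dim U1" by (rule dim_subset)
    then show False using dK dU1 by simp
  qed
  then obtain w2 where w2: "w2 \<in> K" "w2 \<notin> U1" by auto
  have w20: "w2 \<noteq> 0" using w2(2) span_zero unfolding U1_def by auto
  define U2 where "U2 = span {w2, g w2}"
  have dU2: "dim U2 = 2" unfolding U2_def by (rule dim_span2[OF lg w20 kk[OF w2(1)]])
  have sU1: "subspace U1" "subspace U2" unfolding U1_def U2_def by simp_all
  have sums: "dim {x + y |x y. x \<in> U1 \<and> y \<in> U2} + dim (U1 \<inter> U2) = dim U1 + dim U2"
    by (rule dim_sums_Int[OF sU1])
  have U1K: "U1 \<subseteq> K" "U2 \<subseteq> K" using spK[OF w(1)] spK[OF w2(1)] unfolding U1_def U2_def by simp_all
  have sub: "{x + y |x y. x \<in> U1 \<and> y \<in> U2} \<subseteq> K"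
  proof
    fix z assume "z \<in> {x + y |x y. x \<in> U1 \<and> y \<in> U2}"
    then obtain x y where "z = x + y" "x \<in> U1" "y \<in> U2" by blast
    then show "z \<in> K" using U1K sK by (metis subsetD subspace_add)
  qed
  have "dim {x + y |x y. x \<in> U1 \<and> y \<in> U2} \<le> 3" using dim_subset[OF sub] dK by simp
  then have "dim (U1 \<inter> U2) \<noteq> 0" using sums dU1 dU2 by linarith
  then have "\<not> U1 \<inter> U2 \<subseteq> {0}" by (metis dim_eq_0)
  then obtain u where u: "u \<in> U1" "u \<in> U2" "u \<noteq> 0" by auto
  have uK: "u \<in> K" using u(1) spK[OF w(1)] unfolding U1_def by auto
  have gu: "g u \<in> U1" "g u \<in> U2" using u inv[OF w(1)] inv[OF w2(1)] unfolding U1_def U2_def by auto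
  have "span {u, g u} \<subseteq> U1 \<inter> U2"
    using u gu sU1 by (intro span_minimal) (auto intro: subspace_inter)
  then have "dim (span {u, g u}) \<le> dim (U1 \<inter> U2)" by (rule dim_subset)
  then have "dim U2 \<le> dim (U1 \<inter> U2)" using dim_span2[OF lg u(3) kk[OF uK]] dU2 by simp
  then have "span (U1 \<inter> U2) = span U2" by (intro dim_eq_span) auto
  moreover have "span U2 = U2" using sU1(2) by simp
  moreover have "span (U1 \<inter> U2) = U1 \<inter> U2" using sU1 by (simp add: subspace_inter)
  ultimately have "U2 \<subseteq> U1" by auto
  moreover have "w2 \<in> U2" unfolding U2_def by (auto intro: span_base)
  ultimately show False using w2(2) by auto
qed


lemma grp1:
  fixes ba a b w ab aa bb :: "'a::ab_group_add"
  assumes "ba + a + b + w = - ab - w" "aa = - a - w" "bb = - b - w"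
  shows "aa - ab - ba + bb = 0"
proof -
  have "- ab - w = ba + a + b + w" using assms(1) by simp
  then have "- ab = ba + a + b + w + w" by (simp add: diff_eq_eq)
  then have ab: "ab = - (ba + a + b + w + w)" by (metis minus_minus)
  have "aa - ab - ba + bb = (- a - w) - (- (ba + a + b + w + w)) - ba + (- b - w)"
    by (simp only: ab assms(2,3))
  also have "\<dots> = 0" by (simp add: algebra_simps)
  finally show ?thesis .
qed

lemma caseI:
  fixes a b :: "real^4 \<Rightarrow> real^4"
  assumes la: "linear a" and lb: "linear b"
    and ca: "\<And>x. a (a (a x)) = x" and cb: "\<And>x. b (b (b x)) = x"
    and cab: "\<And>x. a (b (a (b (a (b x))))) = x"
    and na: "\<And>v. a v = v \<Longrightarrow> v = 0" and nb: "\<And>v. b v = v \<Longrightarrow> v = 0"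
    and nab: "\<And>v. a (b v) = v \<Longrightarrow> v = 0"
  shows "\<exists>U. subspace U \<and> a ` U \<subseteq> U \<and> b ` U \<subseteq> U \<and> U \<noteq> {0} \<and> U \<noteq> UNIV"
proof -
  define c where "c = (\<lambda>x. a (b x))"
  have lc: "linear c" unfolding c_def using la lb by (simp add: linear_compose[unfolded o_def])
  have cc: "\<And>x. c (c (c x)) = x" unfolding c_def by (simp add: cab)
  have ra: "\<And>u. a (a u) = - a u - u" using rot[OF la ca na] by (simp add: eq_neg_iff_add_eq_0 algebra_simps)
  have rb: "\<And>u. b (b u) = - b u - u" using rot[OF lb cb nb] by (simp add: eq_neg_iff_add_eq_0 algebra_simps)
  have rc: "\<And>u. c (c u) = - c u - u" using rot[OF lc cc] nab unfolding c_def
    by (simp add: eq_neg_iff_add_eq_0 algebra_simps)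
  have t1: "b (a t) + a t + b t + t = b (b (a (a t)))" for t
  proof -
    obtain X where X: "X = a (a t)" by simp
    have hX: "X = - a t - t" using X ra by simp
    have hbX: "b X = - b (a t) - b t" unfolding hX using lb by (simp add: linear_diff linear_neg)
    have "b (b X) = - b X - X" by (rule rb)
    also have "\<dots> = - (- b (a t) - b t) - X" by (simp only: hbX)
    also have "\<dots> = - (- b (a t) - b t) - (- a t - t)" by (simp only: hX)
    also have "\<dots> = b (a t) + a t + b t + t" by (simp add: algebra_simps)
    finally show ?thesis using X by simp
  qed
  have key: "b (a w) + a w + b w + w = - a (b w) - w" for w
  proof -
    have "b (a w) + a w + b w + w = b (b (a (a w)))" by (rule t1)
    also have "w = c (c (c w))" by (simp add: cc)
    then have "b (b (a (a w))) = c (c w)" by (metis c_def ca cb)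
    also have "\<dots> = - a (b w) - w" using rc by (simp add: c_def)
    finally show ?thesis .
  qed
  show ?thesis
  proof (cases "\<exists>w. a w \<noteq> b w")
    case True
    then obtain w where w: "a w \<noteq> b w" by auto
    define U where "U = {v. a v = b v}"
    have sU: "subspace U" unfolding U_def using la lb
      by (auto simp: subspace_def linear_add linear_scale linear_0)
    have aU: "a ` U \<subseteq> U"
    proof
      fix z assume "z \<in> a ` U"
      then obtain v where v: "z = a v" "a v = b v" unfolding U_def by auto
      have k: "b (a v) + a v + b v + v = - a (b v) - v" by (rule key)
      then have "b (a v) + a v + a v + v = - (- a v - v) - v" by (simp only: ra v(2)[symmetric])
      then have hb: "b (a v) = - a v - v" by (simp add: algebra_simps) (metis add.commute add.left_commute eq_neg_iff_add_eq_0)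
      have "a (a v) = b (a v)" using ra[of v] hb by simp
      then show "z \<in> U" using v(1) by (simp add: U_def)
    qed
    have bU: "b ` U \<subseteq> U" using aU unfolding U_def by (auto simp: image_def)
    define m where "m = a w - b w"
    have m0: "m \<noteq> 0" using w by (simp add: m_def)
    have "a m - b m = 0"
    proof -
      have "a m - b m = a (a w) - a (b w) - b (a w) + b (b w)" unfolding m_def using la lb
        by (simp add: linear_diff)
      also have "\<dots> = 0" by (rule grp1[OF key[of w] ra[of w] rb[of w]])
      finally show ?thesis .
    qed
    then have "m \<in> U" by (simp add: U_def)
    then have "U \<noteq> {0}" using m0 by auto
    moreover have "U \<noteq> UNIV" using w by (auto simp: U_def)
    ultimately show ?thesis using sU aU bU by blast
  next
    case False
    then have ab: "\<And>v. b v = a v" by auto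
    define u :: "real^4" where "u = axis 1 1"
    have u0: "u \<noteq> 0" by (simp add: u_def)
    have "a (a u) = (-1) *\<^sub>R u + (-1) *\<^sub>R a u" using ra[of u] by simp
    also have "\<dots> \<in> span {u, a u}" by (intro span_add span_scale span_base) auto
    finally have "a (a u) \<in> span {u, a u}" .
    then have inv: "a ` span {u, a u} \<subseteq> span {u, a u}" by (rule span2_inv[OF la])
    have "b ` span {u, a u} \<subseteq> span {u, a u}" using inv ab by (simp add: image_def) 
    then show ?thesis using inv span2_proper[OF u0, of "a u"] by (intro exI[of _ "span {u, a u}"]) auto
  qed
qed


lemma lin_comp: "linear f \<Longrightarrow> linear g \<Longrightarrow> linear (\<lambda>v. f (g v))"
  using linear_compose[of g f] by (simp add: o_def)

lemma Lx:
  fixes x y :: "real^4 \<Rightarrow> real^4"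
  assumes lx: "linear x" and ly: "linear y"
    and cx: "\<And>v. x (x (x v)) = v" and cy: "\<And>v. y (y (y v)) = v"
    and cxy: "\<And>v. x (y (x (y (x (y v))))) = v"
    and nid: "\<exists>v. x v \<noteq> v" and f2: "dim {v. x v = v} \<ge> 2"
  shows "\<exists>U. subspace U \<and> x ` U \<subseteq> U \<and> y ` U \<subseteq> U \<and> U \<noteq> {0} \<and> U \<noteq> UNIV"
proof -
  define x' where "x' = (\<lambda>v. y (x (y (y v))))"
  define z where "z = (\<lambda>v. y (y (x (y v))))"
  have lx': "linear x'" unfolding x'_def by (rule linearI) (simp_all add: linear_add[OF lx] linear_add[OF ly] linear_scale[OF lx] linear_scale[OF ly])
  have cz: "\<And>v. z (z (z v)) = v" unfolding z_def by (simp add: cx cy)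
  have zxx: "\<And>v. z (x (x' v)) = v" unfolding z_def x'_def by (simp add: cxy cy)
  have xx': "\<And>v. x (x' v) = z (z v)" by (metis cz zxx)
  have cx': "\<And>v. x' (x' (x' v)) = v" unfolding x'_def by (simp add: cx cy)
  have cxx': "\<And>v. x (x' (x (x' (x (x' v))))) = v" by (simp add: xx' cz)
  have xx'z: "\<And>t. x (x' (x (x' t))) = z t" by (simp add: xx' cz)
  have yx: "\<And>s. y (x s) = x' (y s)" unfolding x'_def by (simp add: cy)
  have yx': "\<And>t. y (x' t) = z (y t)" unfolding x'_def z_def by simp
  define F where "F = {v. x v = v}"
  have injy: "inj y" by (metis cy injI)
  have injyy: "inj (\<lambda>v. y (y v))" by (metis cy injI)
  have lyy: "linear (\<lambda>v. y (y v))" by (rule linearI) (simp_all add: linear_add[OF ly] linear_scale[OF ly])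
  have F1: "{v. x' v = v} = y ` F"
  proof
    show "{v. x' v = v} \<subseteq> y ` F"
    proof
      fix v assume "v \<in> {v. x' v = v}"
      then have h: "y (x (y (y v))) = v" by (simp add: x'_def)
      have "x (y (y v)) = y (y (y (x (y (y v)))))" by (simp add: cy)
      also have "\<dots> = y (y v)" using h by simp
      finally have "y (y v) \<in> F" by (simp add: F_def)
      moreover have "v = y (y (y v))" by (simp add: cy)
      ultimately show "v \<in> y ` F" by blast
    qed
    show "y ` F \<subseteq> {v. x' v = v}" by (auto simp: F_def x'_def cy)
  qed
  have zfix: "z v = v \<longleftrightarrow> x (y v) = y v" for v
  proof
    assume "z v = v"
    then have "y (y (x (y v))) = v" by (simp add: z_def)
    then have "y (y (y (x (y v)))) = y v" by simp
    then show "x (y v) = y v" by (simp add: cy)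
  next
    assume "x (y v) = y v"
    then show "z v = v" by (simp add: z_def cy)
  qed
  have zz: "z (z v) = v \<longleftrightarrow> z v = v" for v by (metis cz)
  have F2: "{v. x (x' v) = v} = (\<lambda>v. y (y v)) ` F"
  proof
    show "{v. x (x' v) = v} \<subseteq> (\<lambda>v. y (y v)) ` F"
    proof
      fix v assume "v \<in> {v. x (x' v) = v}"
      then have "x (y v) = y v" using xx' zz zfix by simp
      then have "y v \<in> F" by (simp add: F_def)
      moreover have "v = y (y (y v))" by (simp add: cy)
      ultimately show "v \<in> (\<lambda>v. y (y v)) ` F" by blast
    qed
    show "(\<lambda>v. y (y v)) ` F \<subseteq> {v. x (x' v) = v}"
    proof
      fix v assume "v \<in> (\<lambda>v. y (y v)) ` F"
      then obtain w where w: "v = y (y w)" "x w = w" by (auto simp: F_def)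
      have "x (y v) = y v" using w by (simp add: cy)
      then show "v \<in> {v. x (x' v) = v}" using xx' zz zfix by simp
    qed
  qed
  have dF1: "dim {v. x' v = v} = dim F" unfolding F1
    by (rule dim_image_eq[OF ly]) (use injy in \<open>auto simp: inj_on_def\<close>)
  have dF2: "dim {v. x (x' v) = v} = dim F" unfolding F2
    by (rule dim_image_eq[OF lyy]) (use injyy in \<open>auto simp: inj_on_def\<close>)
  have big: "dim {v. x v = v} + dim {v. x' v = v} + dim {v. x (x' v) = v} > 4"
    using dF1 dF2 f2 unfolding F_def by linarith
  define D where "D = {u + w | u w. u \<in> range (\<lambda>v. x v - v) \<and> w \<in> range (\<lambda>v. x' v - v)}"
  show ?thesis
  proof (cases "D = UNIV")
    case True
    obtain v where v: "v \<noteq> 0" "x v = v" "x' v = v"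
      using coh[OF lx lx' cx cx' cxx' big True[unfolded D_def]] by blast
    define U where "U = {v. x v = v \<and> x' v = v}"
    have sU: "subspace U" unfolding U_def using lx lx'
      by (auto simp: subspace_def linear_add linear_scale linear_0)
    have xU: "x ` U \<subseteq> U" by (auto simp: U_def)
    have yU: "y ` U \<subseteq> U"
    proof
      fix t assume "t \<in> y ` U"
      then obtain u where u: "t = y u" "x u = u" "x' u = u" by (auto simp: U_def)
      have "x' (y u) = y u" using u(2) by (simp add: x'_def cy)
      moreover have "x (y u) = y u"
      proof -
        have "x (x' u) = u" using u by simp
        then show ?thesis using xx' zz zfix by simp
      qed
      ultimately show "t \<in> U" using u(1) by (simp add: U_def)
    qed
    have "U \<noteq> {0}" using v by (auto simp: U_def)
    moreover have "U \<noteq> UNIV" using nid by (auto simp: U_def)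
    ultimately show ?thesis using sU xU yU by blast
  next
    case False
    have sD: "subspace D" unfolding D_def
      by (intro subspace_sums linear_subspace_image lin_sub_id lx lx' subspace_UNIV)
    have l0: "x' 0 = 0" "x 0 = 0" using lx lx' by (simp_all add: linear_0)
    have m1: "x t - t \<in> D" for t unfolding D_def
      by (rule CollectI, rule exI[of _ "x t - t"], rule exI[of _ 0]) (auto simp: l0 intro: image_eqI[of _ _ 0])
    have m2: "x' t - t \<in> D" for t unfolding D_def
      by (rule CollectI, rule exI[of _ 0], rule exI[of _ "x' t - t"]) (auto simp: l0 intro: image_eqI[of _ _ 0])
    have elem: "\<And>e. e \<in> D \<Longrightarrow> \<exists>s t. e = (x s - s) + (x' t - t)" unfolding D_def by blast
    have gen: "f ` D \<subseteq> D" if lf: "linear f" and g1: "\<And>s. f (x s - s) \<in> D" and g2: "\<And>t. f (x' t - t) \<in> D" for f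
    proof
      fix q assume "q \<in> f ` D"
      then obtain e where e: "q = f e" "e \<in> D" by auto
      then obtain s t where "e = (x s - s) + (x' t - t)" using elem by blast
      then have "q = f (x s - s) + f (x' t - t)" using e(1) lf by (simp add: linear_add)
      then show "q \<in> D" using g1 g2 sD by (simp add: subspace_add)
    qed
    have exx: "x (x' q) - q \<in> D" for q
    proof -
      have "x (x' q) - q = (x (x' q) - x' q) + (x' q - q)" by simp
      then show ?thesis using m1 m2 sD by (metis subspace_add)
    qed
    have xD: "x ` D \<subseteq> D"
    proof (rule gen[OF lx])
      fix s show "x (x s - s) \<in> D" using m1[of "x s"] lx by (simp add: linear_diff)
    next
      fix t
      have "x (x' t - t) = (x (x' t) - x' t) + (x' t - t) - (x t - t)" using lx by (simp add: linear_diff)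
      then show "x (x' t - t) \<in> D" using m1 m2 sD by (metis subspace_add subspace_diff)
    qed
    have x'D: "x' ` D \<subseteq> D"
    proof (rule gen[OF lx'])
      fix s
      have "x' (x s - s) = (x' (x s) - x s) + (x s - s) - (x' s - s)" using lx' by (simp add: linear_diff)
      then show "x' (x s - s) \<in> D" using m1 m2 sD by (metis subspace_add subspace_diff)
    next
      fix t show "x' (x' t - t) \<in> D" using m2[of "x' t"] lx' by (simp add: linear_diff)
    qed
    have yD: "y ` D \<subseteq> D"
    proof (rule gen[OF ly])
      fix s
      have "y (x s - s) = x' (y s) - y s" using ly yx by (simp add: linear_diff)
      then show "y (x s - s) \<in> D" using m2 by simp
    next
      fix t
      have "y (x' t - t) = z (y t) - y t" using ly yx' by (simp add: linear_diff)
      also have "\<dots> = (x (x' (x (x' (y t)))) - x (x' (y t))) + (x (x' (y t)) - y t)"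
        by (simp add: xx'z)
      finally show "y (x' t - t) \<in> D" using exx sD by (metis subspace_add)
    qed
    obtain v0 where v0: "x v0 \<noteq> v0" using nid by blast
    have "x v0 - v0 \<in> D" by (rule m1)
    moreover have "x v0 - v0 \<noteq> 0" using v0 by simp
    ultimately have "D \<noteq> {0}" by blast
    then show ?thesis using sD xD yD False by blast
  qed
qed


lemma red:
  fixes a b :: "real^4 \<Rightarrow> real^4"
  assumes la: "linear a" and lb: "linear b"
    and ca: "\<And>x. a (a (a x)) = x" and cb: "\<And>x. b (b (b x)) = x"
    and cab: "\<And>x. a (b (a (b (a (b x))))) = x"
  shows "\<exists>U. subspace U \<and> a ` U \<subseteq> U \<and> b ` U \<subseteq> U \<and> U \<noteq> {0} \<and> U \<noteq> UNIV"
proof -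
  define c' where "c' = (\<lambda>v. b (b (a (a v))))"
  have lc': "linear c'" unfolding c'_def
    by (rule linearI) (simp_all add: linear_add[OF la] linear_add[OF lb] linear_scale[OF la] linear_scale[OF lb])
  have abc: "\<And>t. a (b (c' t)) = t" unfolding c'_def by (simp add: ca cb)
  have cc': "\<And>v. c' (c' (c' v)) = v"
  proof -
    fix v
    have "a (b (a (b (a (b (c' (c' (c' v)))))))) = c' (c' (c' v))" by (rule cab)
    moreover have "a (b (a (b (a (b (c' (c' (c' v)))))))) = v" by (simp add: abc)
    ultimately show "c' (c' (c' v)) = v" by simp
  qed
  have bc': "\<And>t. b (c' t) = a (a t)" unfolding c'_def by (simp add: cb)
  have c'a: "\<And>t. c' (a t) = b (b t)" unfolding c'_def by (simp add: ca)
  have sp: "\<exists>U. subspace U \<and> g ` U \<subseteq> U \<and> U \<noteq> {0} \<and> U \<noteq> UNIV"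
    if lg: "linear g" and cg: "\<And>x. g (g (g x)) = x" for g :: "real^4 \<Rightarrow> real^4"
  proof -
    obtain u where u: "u \<noteq> 0" "g (g u) \<in> span {u, g u}" using single[OF lg cg] by blast
    show ?thesis using span2_inv[OF lg u(2)] span2_proper[OF u(1)] by (intro exI[of _ "span {u, g u}"]) auto
  qed
  show ?thesis
  proof (cases "\<forall>v. a v = v")
    case True
    then obtain U where "subspace U" "b ` U \<subseteq> U" "U \<noteq> {0}" "U \<noteq> UNIV" using sp[OF lb cb] by blast
    moreover have "a ` U \<subseteq> U" using True by auto
    ultimately show ?thesis by blast
  next
    case na: False
    show ?thesis
    proof (cases "\<forall>v. b v = v")
      case True
      then obtain U where "subspace U" "a ` U \<subseteq> U" "U \<noteq> {0}" "U \<noteq> UNIV" using sp[OF la ca] by blast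
      moreover have "b ` U \<subseteq> U" using True by auto
      ultimately show ?thesis by blast
    next
      case nb: False
      show ?thesis
      proof (cases "\<forall>v. a (b v) = v")
        case True
        then obtain U where U: "subspace U" "a ` U \<subseteq> U" "U \<noteq> {0}" "U \<noteq> UNIV" using sp[OF la ca] by blast
        have "b v = a (a v)" for v by (metis True ca)
        then have "b ` U \<subseteq> U" using U(2) by (auto simp: image_subset_iff)
        then show ?thesis using U by blast
      next
        case nab: False
        show ?thesis
        proof (cases "dim {v. a v = v} \<ge> 2")
          case True
          then show ?thesis using Lx[OF la lb ca cb cab] na by blast
        next
          case fa: False
          show ?thesis
          proof (cases "dim {v. b v = v} \<ge> 2")
            case True
            have cxy: "\<And>v. b (c' (b (c' (b (c' v))))) = v" by (simp add: bc' ca)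
            obtain U where U: "subspace U" "b ` U \<subseteq> U" "c' ` U \<subseteq> U" "U \<noteq> {0}" "U \<noteq> UNIV"
              using Lx[OF lb lc' cb cc' cxy] nb True by blast
            have "a v = b (c' (b (c' v)))" for v by (simp add: bc' ca)
            then have "a ` U \<subseteq> U" using U(2,3) by (auto simp: image_subset_iff)
            then show ?thesis using U by blast
          next
            case fb: False
            show ?thesis
            proof (cases "dim {v. a (b v) = v} \<ge> 2")
              case True
              have cxy: "\<And>v. c' (a (c' (a (c' (a v))))) = v" by (simp add: c'a cb)
              have nid: "\<exists>v. c' v \<noteq> v" using nab abc by metis
              have "{v. c' v = v} = {v. a (b v) = v}"
              proof (intro Collect_cong iffI)
                fix v assume "c' v = v" then show "a (b v) = v" using abc by metis
              next
                fix v assume "a (b v) = v" then show "c' v = v" using c'a cb by metis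
              qed
              then have f2: "dim {v. c' v = v} \<ge> 2" using True by simp
              obtain U where U: "subspace U" "c' ` U \<subseteq> U" "a ` U \<subseteq> U" "U \<noteq> {0}" "U \<noteq> UNIV"
                using Lx[OF lc' la cc' ca cxy nid f2] by blast
              have "b v = c' (a (c' (a v)))" for v by (simp add: c'a cb)
              then have "b ` U \<subseteq> U" using U(2,3) by (auto simp: image_subset_iff)
              then show ?thesis using U by blast
            next
              case fab: False
              have z: "dim {v. g v = v} = 0" if lg: "linear g" and cg: "\<And>x. g (g (g x)) = x"
                and le: "\<not> dim {v. g v = v} \<ge> 2" for g :: "real^4 \<Rightarrow> real^4"
                using parity[OF lg cg] le by linarith
              have lab: "linear (\<lambda>v. a (b v))"
                by (rule linearI) (simp_all add: linear_add[OF la] linear_add[OF lb] linear_scale[OF la] linear_scale[OF lb])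
              have cab': "\<And>x. a (b (a (b (a (b x))))) = x" by (rule cab)
              have za: "dim {v. a v = v} = 0" by (rule z[OF la ca fa])
              have zb: "dim {v. b v = v} = 0" by (rule z[OF lb cb fb])
              have zab: "dim {v. a (b v) = v} = 0" by (rule z[OF lab cab' fab])
              have n1: "\<And>v. a v = v \<Longrightarrow> v = 0" using dim_eq_0[THEN iffD1, OF za] by blast
              have n2: "\<And>v. b v = v \<Longrightarrow> v = 0" using dim_eq_0[THEN iffD1, OF zb] by blast
              have n3: "\<And>v. a (b v) = v \<Longrightarrow> v = 0" using dim_eq_0[THEN iffD1, OF zab] by blast
              show ?thesis by (rule caseI[OF la lb ca cb cab n1 n2 n3])
            qed
          qed
        qed
      qed
    qed
  qed
qed


lemma vector_4 [simp]:
 "(vector [a,b,c,d] ::('a::zero)^4)$1 = a"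
 "(vector [a,b,c,d] ::('a::zero)^4)$2 = b"
 "(vector [a,b,c,d] ::('a::zero)^4)$3 = c"
 "(vector [a,b,c,d] ::('a::zero)^4)$4 = d"
  unfolding vector_def by simp_all

definition e3 :: "real^3 \<Rightarrow> real^4" where "e3 x = vector [x$1, x$2, x$3, 0]"
definition p3 :: "real^4 \<Rightarrow> real^3" where "p3 y = vector [y$1, y$2, y$3]"
definition e4 :: "real^4" where "e4 = vector [0, 0, 0, 1]"
definition e12 :: "real^2 \<Rightarrow> real^4" where "e12 x = vector [x$1, x$2, 0, 0]"
definition e34 :: "real^2 \<Rightarrow> real^4" where "e34 x = vector [0, 0, x$1, x$2]"
definition p12 :: "real^4 \<Rightarrow> real^2" where "p12 y = vector [y$1, y$2]"
definition p34 :: "real^4 \<Rightarrow> real^2" where "p34 y = vector [y$3, y$4]"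

lemma embed_i_act: "embed_i X *v y = e3 (X *v p3 y) + (y$4) *\<^sub>R e4"
  unfolding vec_eq_iff forall_4
  by (simp add: embed_i_def e3_def p3_def e4_def matrix_vector_mult_def sum_4 sum_3)

lemma embed_j_act: "embed_j X Y *v y = e12 (X *v p12 y) + e34 (Y *v p34 y)"
  unfolding vec_eq_iff forall_4
  by (simp add: embed_j_def e12_def e34_def p12_def p34_def matrix_vector_mult_def sum_4 sum_2)


definition ss_on :: "real^'n^'n \<Rightarrow> real^'n^'n \<Rightarrow> (real^'n) set \<Rightarrow> bool" where
  "ss_on A B S \<longleftrightarrow> (\<forall>U. invariant_subspace A B U \<and> U \<subseteq> S \<longrightarrow>
     (\<exists>W. invariant_subspace A B W \<and> W \<subseteq> S \<and> U \<inter> W = {0} \<and> {u + w | u w. u \<in> U \<and> w \<in> W} = S))"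

lemma ss_UNIV: "semisimple_rep A B \<longleftrightarrow> ss_on A B UNIV"
  unfolding semisimple_rep_def ss_on_def by auto

lemma ss_sub:
  assumes ss: "ss_on A B UNIV" and S: "invariant_subspace A B S"
  shows "ss_on A B S"
  unfolding ss_on_def
proof (intro allI impI)
  fix U assume U: "invariant_subspace A B U \<and> U \<subseteq> S"
  obtain C where C: "invariant_subspace A B C" "U \<inter> C = {0}" "{u + w | u w. u \<in> U \<and> w \<in> C} = UNIV"
    using ss[unfolded ss_on_def, rule_format, OF conjI[OF conjunct1[OF U] subset_UNIV]] by blast
  define W where "W = C \<inter> S"
  have iW: "invariant_subspace A B W" using C(1) S unfolding W_def invariant_subspace_def
    by (auto simp: subspace_inter)
  have "0 \<in> U" "0 \<in> W" using U iW by (auto simp: invariant_subspace_def subspace_0)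
  then have UW: "U \<inter> W = {0}" using C(2) by (auto simp: W_def)
  have "{u + w | u w. u \<in> U \<and> w \<in> W} = S"
  proof
    show "{u + w | u w. u \<in> U \<and> w \<in> W} \<subseteq> S"
      using U S by (auto simp: W_def invariant_subspace_def intro: subspace_add)
    show "S \<subseteq> {u + w | u w. u \<in> U \<and> w \<in> W}"
    proof
      fix s assume s: "s \<in> S"
      obtain u c where uc: "s = u + c" "u \<in> U" "c \<in> C" using C(3) by blast
      have sS: "subspace S" using S by (simp add: invariant_subspace_def)
      have uS: "u \<in> S" using uc U by auto
      have "c = s - u" using uc by simp
      then have "c \<in> S" using subspace_diff[OF sS s uS] by simp
      then show "s \<in> {u + w | u w. u \<in> U \<and> w \<in> W}" using uc by (auto simp: W_def)
    qed
  qed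
  then show "\<exists>W. invariant_subspace A B W \<and> W \<subseteq> S \<and> U \<inter> W = {0} \<and> {u + w | u w. u \<in> U \<and> w \<in> W} = S"
    using iW UW by (intro exI[of _ W]) (auto simp: W_def)
qed

lemma ss_triv:
  assumes sS: "subspace S" and fx: "\<And>v. v \<in> S \<Longrightarrow> A *v v = v \<and> B *v v = v"
  shows "ss_on A B S"
  unfolding ss_on_def
proof (intro allI impI)
  fix U assume U: "invariant_subspace A B U \<and> U \<subseteq> S"
  define W where "W = {y \<in> S. \<forall>x \<in> U. orthogonal x y}"
  have sW: "subspace W" unfolding W_def
    using sS by (auto simp: subspace_def orthogonal_clauses)
  have iW: "invariant_subspace A B W" unfolding invariant_subspace_def
    using sW fx by (auto simp: W_def)
  have UW: "U \<inter> W = {0}"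
    using U iW by (auto simp: W_def orthogonal_def invariant_subspace_def subspace_0)
  have "{u + w | u w. u \<in> U \<and> w \<in> W} = S"
  proof
    show "{u + w | u w. u \<in> U \<and> w \<in> W} \<subseteq> S"
      using U sS by (auto simp: W_def intro: subspace_add)
    show "S \<subseteq> {u + w | u w. u \<in> U \<and> w \<in> W}"
    proof
      fix s assume s: "s \<in> S"
      obtain y z where yz: "s = y + z" "y \<in> span U" "\<And>w. w \<in> span U \<Longrightarrow> orthogonal z w"
        using orthogonal_subspace_decomp_exists[of U s] by metis
      have sU: "subspace U" using U by (simp add: invariant_subspace_def)
      have yU: "y \<in> U" using yz(2) sU by (metis span_eq_iff)
      have "z = s - y" using yz by simp
      then have "z \<in> S" using s yU U sS by (auto intro: subspace_diff)
      then have "z \<in> W" using yz(3) yU unfolding W_def by (auto simp: orthogonal_commute span_base)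
      then show "s \<in> {u + w | u w. u \<in> U \<and> w \<in> W}" using yz(1) yU by blast
    qed
  qed
  then show "\<exists>W. invariant_subspace A B W \<and> W \<subseteq> S \<and> U \<inter> W = {0} \<and> {u + w | u w. u \<in> U \<and> w \<in> W} = S"
    using iW UW by (intro exI[of _ W]) (auto simp: W_def)
qed

lemma ss_transport:
  fixes \<iota> :: "real^'m \<Rightarrow> real^'n" and A B :: "real^'n^'n" and A' B' :: "real^'m^'m"
  assumes li: "linear \<iota>" and ii: "inj \<iota>"
    and iA: "\<And>x. A *v \<iota> x = \<iota> (A' *v x)" and iB: "\<And>x. B *v \<iota> x = \<iota> (B' *v x)"
  shows "ss_on A B (range \<iota>) \<longleftrightarrow> semisimple_rep A' B'"
proof
  assume ss: "ss_on A B (range \<iota>)"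
  show "semisimple_rep A' B'" unfolding semisimple_rep_def
  proof (intro allI impI)
    fix U' assume U': "invariant_subspace A' B' U'"
    define U where "U = \<iota> ` U'"
    have iU: "invariant_subspace A B U" using U' unfolding U_def invariant_subspace_def
      by (auto simp: iA iB linear_subspace_image[OF li] image_subset_iff)
    obtain W where W: "invariant_subspace A B W" "W \<subseteq> range \<iota>" "U \<inter> W = {0}"
      "{u + w | u w. u \<in> U \<and> w \<in> W} = range \<iota>"
      using ss[unfolded ss_on_def, rule_format, OF conjI[OF iU], of] unfolding U_def by blast
    define W' where "W' = {x. \<iota> x \<in> W}"
    have sW': "subspace W'" using W(1) li unfolding W'_def invariant_subspace_def
      by (auto simp: subspace_def linear_add linear_scale linear_0)
    have iW': "invariant_subspace A' B' W'" using sW' W(1) unfolding W'_def invariant_subspace_def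
      by (auto simp: iA[symmetric] iB[symmetric] image_subset_iff)
    have "U' \<inter> W' = {0}"
    proof -
      have "x = 0" if "x \<in> U'" "\<iota> x \<in> W" for x
      proof -
        have "\<iota> x \<in> U \<inter> W" using that by (auto simp: U_def)
        then have "\<iota> x = 0" using W(3) by auto
        then show "x = 0" using ii li by (metis injD linear_0)
      qed
      moreover have "0 \<in> U'" "0 \<in> W'" using U' sW' by (auto simp: invariant_subspace_def subspace_0)
      ultimately show ?thesis unfolding W'_def by auto
    qed
    moreover have "{u + w | u w. u \<in> U' \<and> w \<in> W'} = UNIV"
    proof -
      have "x \<in> {u + w | u w. u \<in> U' \<and> w \<in> W'}" for x
      proof -
        have "\<iota> x \<in> range \<iota>" by simp
        then obtain u w where uw: "\<iota> x = u + w" "u \<in> U" "w \<in> W" using W(4) by blast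
        obtain u' where u': "u = \<iota> u'" "u' \<in> U'" using uw(2) by (auto simp: U_def)
        obtain w' where w': "w = \<iota> w'" using uw(3) W(2) by auto
        have "\<iota> x = \<iota> (u' + w')" using uw u' w' li by (simp add: linear_add)
        then have "x = u' + w'" using ii by (simp add: inj_eq)
        moreover have "w' \<in> W'" using uw(3) w' by (simp add: W'_def)
        ultimately show ?thesis using u' by blast
      qed
      then show ?thesis by blast
    qed
    ultimately show "\<exists>W. invariant_subspace A' B' W \<and> U' \<inter> W = {0} \<and> {u + w | u w. u \<in> U' \<and> w \<in> W} = UNIV"
      using iW' by blast
  qed
next
  assume ss: "semisimple_rep A' B'"
  show "ss_on A B (range \<iota>)" unfolding ss_on_def
  proof (intro allI impI)
    fix U assume U: "invariant_subspace A B U \<and> U \<subseteq> range \<iota>"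
    define U' where "U' = {x. \<iota> x \<in> U}"
    have sU': "subspace U'" using U li unfolding U'_def invariant_subspace_def
      by (auto simp: subspace_def linear_add linear_scale linear_0)
    have iU': "invariant_subspace A' B' U'" using sU' U unfolding U'_def invariant_subspace_def
      by (auto simp: iA[symmetric] iB[symmetric] image_subset_iff)
    obtain W' where W': "invariant_subspace A' B' W'" "U' \<inter> W' = {0}" "{u + w | u w. u \<in> U' \<and> w \<in> W'} = UNIV"
      using ss[unfolded semisimple_rep_def, rule_format, OF iU'] by blast
    define W where "W = \<iota> ` W'"
    have iW: "invariant_subspace A B W" using W'(1) unfolding W_def invariant_subspace_def
      by (auto simp: iA iB linear_subspace_image[OF li] image_subset_iff)
    have "U \<inter> W = {0}"
    proof -
      have "y = 0" if yU: "y \<in> U" and yW: "y \<in> W" for y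
      proof -
        obtain w where w: "y = \<iota> w" "w \<in> W'" using yW by (auto simp: W_def)
        then have "w \<in> U'" using yU by (simp add: U'_def)
        then have "w = 0" using w W'(2) by auto
        then show "y = 0" using w li by (simp add: linear_0)
      qed
      moreover have "0 \<in> U" "0 \<in> W" using U iW by (auto simp: invariant_subspace_def subspace_0)
      ultimately show ?thesis by auto
    qed
    moreover have "{u + w | u w. u \<in> U \<and> w \<in> W} = range \<iota>"
    proof
      show "{u + w | u w. u \<in> U \<and> w \<in> W} \<subseteq> range \<iota>"
      proof
        fix y assume "y \<in> {u + w | u w. u \<in> U \<and> w \<in> W}"
        then obtain u w where uw: "y = u + w" "u \<in> U" "w \<in> W" by blast
        obtain u' where "u = \<iota> u'" using uw(2) U by auto
        moreover obtain w' where "w = \<iota> w'" using uw(3) by (auto simp: W_def)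
        ultimately have "y = \<iota> (u' + w')" using uw(1) li by (simp add: linear_add)
        then show "y \<in> range \<iota>" by simp
      qed
      show "range \<iota> \<subseteq> {u + w | u w. u \<in> U \<and> w \<in> W}"
      proof
        fix y assume "y \<in> range \<iota>"
        then obtain x where x: "y = \<iota> x" by auto
        obtain u' w' where uw: "x = u' + w'" "u' \<in> U'" "w' \<in> W'" using W'(3) by blast
        have "y = \<iota> u' + \<iota> w'" using x uw li by (simp add: linear_add)
        moreover have "\<iota> u' \<in> U" using uw(2) by (simp add: U'_def)
        moreover have "\<iota> w' \<in> W" using uw(3) by (simp add: W_def)
        ultimately show "y \<in> {u + w | u w. u \<in> U \<and> w \<in> W}" by blast
      qed
    qed
    ultimately show "\<exists>W. invariant_subspace A B W \<and> W \<subseteq> range \<iota> \<and> U \<inter> W = {0} \<and> {u + w | u w. u \<in> U \<and> w \<in> W} = range \<iota>"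
      using iW by (auto simp: W_def)
  qed
qed


lemma inv_sum:
  assumes "invariant_subspace A B X" "invariant_subspace A B Y"
  shows "invariant_subspace A B {x + y | x y. x \<in> X \<and> y \<in> Y}"
proof -
  have s: "subspace {x + y | x y. x \<in> X \<and> y \<in> Y}"
    using assms by (intro subspace_sums) (auto simp: invariant_subspace_def)
  have "M *v (x + y) \<in> {x + y | x y. x \<in> X \<and> y \<in> Y}"
    if "x \<in> X" "y \<in> Y" "(\<lambda>v. M *v v) ` X \<subseteq> X" "(\<lambda>v. M *v v) ` Y \<subseteq> Y" for M x y
  proof -
    have "M *v (x + y) = M *v x + M *v y" by (simp add: matrix_vector_right_distrib)
    moreover have "M *v x \<in> X" "M *v y \<in> Y" using that by auto
    ultimately show ?thesis by blast
  qed
  then show ?thesis using s assms unfolding invariant_subspace_def by blast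
qed

lemma inv_int:
  assumes "invariant_subspace A B X" "invariant_subspace A B Y"
  shows "invariant_subspace A B (X \<inter> Y)"
  using assms unfolding invariant_subspace_def by (auto simp: subspace_inter)

lemma inv_zero: "invariant_subspace A B {0}"
  unfolding invariant_subspace_def by (auto simp: subspace_def)

lemma ss_sum:
  fixes A B :: "real^'n^'n"
  assumes i1: "invariant_subspace A B V1" and i2: "invariant_subspace A B V2"
    and sum: "{x + y | x y. x \<in> V1 \<and> y \<in> V2} = UNIV"
    and s1: "ss_on A B V1" and s2: "ss_on A B V2"
  shows "semisimple_rep A B"
  unfolding semisimple_rep_def
proof (intro allI impI)
  fix U assume iU: "invariant_subspace A B U"
  define P where "P = (\<lambda>W. invariant_subspace A B W \<and> U \<inter> W = {0})"
  have P0: "P {0}" unfolding P_def using inv_zero iU by (auto simp: invariant_subspace_def subspace_0)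
  have bnd: "\<forall>W. P W \<longrightarrow> dim W < CARD('n) + 1"
    using dim_subset_UNIV_cart[where 'n='n] by (metis less_Suc_eq_le Suc_eq_plus1)
  obtain W where PW: "P W" and maxW: "\<And>W'. P W' \<Longrightarrow> dim W' \<le> dim W"
    using ex_has_greatest_nat[of P "{0}" dim "CARD('n) + 1", OF P0 bnd] by blast
  have iW: "invariant_subspace A B W" and UW: "U \<inter> W = {0}" using PW by (auto simp: P_def)
  define S where "S = {u + w | u w. u \<in> U \<and> w \<in> W}"
  have iS: "invariant_subspace A B S" unfolding S_def by (rule inv_sum[OF iU iW])
  have sS: "subspace S" using iS by (simp add: invariant_subspace_def)
  have sW: "subspace W" using iW by (simp add: invariant_subspace_def)
  have sU: "subspace U" using iU by (simp add: invariant_subspace_def)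
  have claim: "V \<subseteq> S" if iV: "invariant_subspace A B V" and sV: "ss_on A B V" for V
  proof -
    define D where "D = S \<inter> V"
    have iD: "invariant_subspace A B D" unfolding D_def by (rule inv_int[OF iS iV])
    obtain C where C: "invariant_subspace A B C" "C \<subseteq> V" "D \<inter> C = {0}" "{u + w | u w. u \<in> D \<and> w \<in> C} = V"
      using sV[unfolded ss_on_def, rule_format, OF conjI[OF iD]] by (auto simp: D_def)
    define W' where "W' = {w + c | w c. w \<in> W \<and> c \<in> C}"
    have iW': "invariant_subspace A B W'" unfolding W'_def by (rule inv_sum[OF iW C(1)])
    have UW': "U \<inter> W' = {0}"
    proof -
      have "x = 0" if xU: "x \<in> U" and xW': "x \<in> W'" for x
      proof -
        obtain w c where wc: "x = w + c" "w \<in> W" "c \<in> C" using xW' by (auto simp: W'_def)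
        have "c = x + (- w)" using wc by simp
        moreover have "- w \<in> W" using sW wc(2) by (simp add: subspace_neg)
        ultimately have "c \<in> S" using xU unfolding S_def by blast
        moreover have "c \<in> V" using wc(3) C(2) by auto
        ultimately have "c \<in> D \<inter> C" using wc(3) by (simp add: D_def)
        then have "c = 0" using C(3) by auto
        then have "x \<in> U \<inter> W" using wc xU by simp
        then show "x = 0" using UW by auto
      qed
      moreover have "0 \<in> U \<inter> W'" using iU iW' by (auto simp: invariant_subspace_def subspace_0)
      ultimately show ?thesis by auto
    qed
    have "dim W' \<le> dim W" using maxW iW' UW' by (simp add: P_def)
    moreover have WW': "W \<subseteq> W'"
    proof
      fix w assume "w \<in> W"
      moreover have "0 \<in> C" using C(1) by (simp add: invariant_subspace_def subspace_0)
      ultimately show "w \<in> W'" unfolding W'_def by force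
    qed
    ultimately have "span W = span W'" by (intro dim_eq_span)
    moreover have "subspace W'" using iW' by (simp add: invariant_subspace_def)
    ultimately have eqW: "W' = W" using sW by (metis span_eq_iff)
    have CW: "C \<subseteq> W"
    proof
      fix c assume "c \<in> C"
      moreover have "0 \<in> W" using sW by (simp add: subspace_0)
      ultimately have "0 + c \<in> W'" unfolding W'_def by blast
      then show "c \<in> W" using eqW by simp
    qed
    have CS: "C \<subseteq> S"
    proof
      fix c assume "c \<in> C"
      then have "c \<in> W" using CW by auto
      moreover have "0 \<in> U" using sU by (simp add: subspace_0)
      ultimately have "0 + c \<in> S" unfolding S_def by blast
      then show "c \<in> S" by simp
    qed
    have C0: "C \<subseteq> {0}" using CS C(2) C(3) by (auto simp: D_def)
    show "V \<subseteq> S"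
    proof
      fix v assume "v \<in> V"
      then obtain d c where dc: "v = d + c" "d \<in> D" "c \<in> C" using C(4) by blast
      then have "c = 0" using C0 by auto
      then show "v \<in> S" using dc by (simp add: D_def)
    qed
  qed
  have SU: "S = UNIV"
  proof -
    have "z \<in> S" for z
    proof -
      obtain x y where "z = x + y" "x \<in> V1" "y \<in> V2" using sum by blast
      then show ?thesis using claim[OF i1 s1] claim[OF i2 s2] sS by (metis subsetD subspace_add)
    qed
    then show ?thesis by auto
  qed
  show "\<exists>W. invariant_subspace A B W \<and> U \<inter> W = {0} \<and> {u + w |u w. u \<in> U \<and> w \<in> W} = UNIV"
    using iW UW SU unfolding S_def by blast
qed


lemma lin_p3: "linear p3"
  by (rule linearI) (simp_all add: vec_eq_iff forall_3 p3_def)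
lemma lin_p12: "linear p12"
  by (rule linearI) (simp_all add: vec_eq_iff forall_2 p12_def)
lemma lin_p34: "linear p34"
  by (rule linearI) (simp_all add: vec_eq_iff forall_2 p34_def)
lemma lin_e3: "linear e3"
  by (rule linearI) (simp_all add: vec_eq_iff forall_4 e3_def)
lemma lin_e12: "linear e12"
  by (rule linearI) (simp_all add: vec_eq_iff forall_4 e12_def)
lemma lin_e34: "linear e34"
  by (rule linearI) (simp_all add: vec_eq_iff forall_4 e34_def)

lemma p3_e3 [simp]: "p3 (e3 x + t *\<^sub>R e4) = x" "(e3 x + t *\<^sub>R e4) $ 4 = t"
  by (simp_all add: vec_eq_iff forall_3 p3_def e3_def e4_def)
lemma p12_e [simp]: "p12 (e12 x + e34 z) = x" "p34 (e12 x + e34 z) = z"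
  by (simp_all add: vec_eq_iff forall_2 p12_def p34_def e12_def e34_def)
lemma e3_p3: "e3 (p3 y) + (y$4) *\<^sub>R e4 = y"
  by (simp add: vec_eq_iff forall_4 p3_def e3_def e4_def)
lemma e12_p12: "e12 (p12 y) + e34 (p34 y) = y"
  by (simp add: vec_eq_iff forall_4 p12_def p34_def e12_def e34_def)
lemma p3_e3' [simp]: "p3 (e3 x) = x" by (simp add: vec_eq_iff forall_3 p3_def e3_def)
lemma p12_e12 [simp]: "p12 (e12 x) = x" by (simp add: vec_eq_iff forall_2 p12_def e12_def)
lemma p34_e34 [simp]: "p34 (e34 x) = x" by (simp add: vec_eq_iff forall_2 p34_def e34_def)

definition Dc :: "real \<Rightarrow> real^4^4" where
  "Dc c = (\<chi> i j. if i = j then (if i = 4 then c else 1) else 0)"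

lemma Dc_act: "p3 (Dc c *v y) = p3 y" "(Dc c *v y)$4 = c * y$4"
  "p12 (Dc c *v y) = p12 y" "p34 (Dc c *v y) = vector [y$3, c * y$4]"
  by (simp_all add: vec_eq_iff forall_3 forall_2 p3_def p12_def p34_def Dc_def matrix_vector_mult_def sum_4)

lemma det_Dc: "det (Dc c) = c"
proof -
  have "det (Dc c) = prod (\<lambda>i. Dc c $ i $ i) UNIV" by (rule det_diagonal) (simp add: Dc_def)
  also have "\<dots> = prod (\<lambda>i. if i = 4 then c else 1) (UNIV::4 set)" by (simp add: Dc_def)
  also have "\<dots> = c" by (subst prod.delta) auto
  finally show ?thesis .
qed


lemma cube_mat: "(M ** M ** M) *v x = M *v (M *v (M *v x))"
  by (simp add: matrix_vector_mul_assoc matrix_mul_assoc)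
lemma cube_mat2: "((M ** N) ** (M ** N) ** (M ** N)) *v x = M *v (N *v (M *v (N *v (M *v (N *v x)))))"
  by (simp add: matrix_vector_mul_assoc matrix_mul_assoc)

lemma rep_facts:
  assumes "rep_Gamma_SL A B"
  shows "\<And>x. A *v (A *v (A *v x)) = x" "\<And>x. B *v (B *v (B *v x)) = x"
    "\<And>x. A *v (B *v (A *v (B *v (A *v (B *v x))))) = x"
  using assms unfolding rep_Gamma_SL_def
  by (metis cube_mat matrix_vector_mul_lid, metis cube_mat matrix_vector_mul_lid, metis cube_mat2 matrix_vector_mul_lid)

lemma red_mat:
  fixes A B :: "real^4^4"
  assumes "rep_Gamma_SL A B"
  shows "\<exists>U. invariant_subspace A B U \<and> U \<noteq> {0} \<and> U \<noteq> UNIV"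
proof -
  obtain U where "subspace U" "(\<lambda>v. A *v v) ` U \<subseteq> U" "(\<lambda>v. B *v v) ` U \<subseteq> U" "U \<noteq> {0}" "U \<noteq> UNIV"
    using red[OF matrix_vector_mul_linear matrix_vector_mul_linear rep_facts[OF assms]] by blast
  then show ?thesis unfolding invariant_subspace_def by blast
qed

lemma real_cube_one: "(x::real) * x * x = 1 \<Longrightarrow> x = 1"
proof -
  assume h: "x * x * x = 1"
  have "(x - 1) * (x * x + x + 1) = 0" using h by (simp add: algebra_simps)
  moreover have "x * x + x + 1 \<noteq> 0"
  proof -
    have a: "0 \<le> (x + 1/2) * (x + 1/2)" by simp
    have "x * x + x + 1 = (x + 1/2) * (x + 1/2) + 3/4" by (simp add: algebra_simps)
    then show ?thesis using a by linarith
  qed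
  ultimately show "x = 1" by simp
qed

lemma det_cube: "M ** M ** M = mat 1 \<Longrightarrow> det (M::real^'n^'n) = 1"
  by (rule real_cube_one) (metis det_I det_mul)

lemma block_rep:
  fixes \<iota> :: "real^'m \<Rightarrow> real^'n" and A B :: "real^'n^'n" and A' B' :: "real^'m^'m"
  assumes li: "linear \<iota>" and ii: "inj \<iota>"
    and iA: "\<And>x. A *v \<iota> x = \<iota> (A' *v x)" and iB: "\<And>x. B *v \<iota> x = \<iota> (B' *v x)"
    and r: "rep_Gamma_SL A B"
  shows "rep_Gamma_SL A' B'"
proof -
  note rf = rep_facts[OF r]
  have c1: "A' ** A' ** A' = mat 1"
    unfolding matrix_eq cube_mat
  proof
    fix x
    have "\<iota> (A' *v (A' *v (A' *v x))) = \<iota> x" using rf(1)[of "\<iota> x"] by (simp add: iA)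
    then show "A' *v (A' *v (A' *v x)) = mat 1 *v x" using ii by (simp add: inj_eq)
  qed
  have c2: "B' ** B' ** B' = mat 1"
    unfolding matrix_eq cube_mat
  proof
    fix x
    have "\<iota> (B' *v (B' *v (B' *v x))) = \<iota> x" using rf(2)[of "\<iota> x"] by (simp add: iB)
    then show "B' *v (B' *v (B' *v x)) = mat 1 *v x" using ii by (simp add: inj_eq)
  qed
  have c3: "(A' ** B') ** (A' ** B') ** (A' ** B') = mat 1"
    unfolding matrix_eq cube_mat2
  proof
    fix x
    have "\<iota> (A' *v (B' *v (A' *v (B' *v (A' *v (B' *v x)))))) = \<iota> x" using rf(3)[of "\<iota> x"] by (simp add: iA iB)
    then show "A' *v (B' *v (A' *v (B' *v (A' *v (B' *v x))))) = mat 1 *v x" using ii by (simp add: inj_eq)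
  qed
  show ?thesis unfolding rep_Gamma_SL_def using c1 c2 c3 det_cube[OF c1] det_cube[OF c2] by simp
qed

lemma finish:
  fixes Q R A B MA MB :: "real^4^4"
  assumes RQ: "R ** Q = mat 1" and QR: "Q ** R = mat 1" and dQ: "det Q = 1"
    and eA: "A ** Q = Q ** MA" and eB: "B ** Q = Q ** MB"
  shows "det R = 1 \<and> conj_SL R A = MA \<and> conj_SL R B = MB"
proof -
  have inv: "matrix_inv R = Q"
    unfolding matrix_inv_def
  proof (rule some_equality)
    show "R ** Q = mat 1 \<and> Q ** R = mat 1" using RQ QR by simp
  next
    fix X assume X: "R ** X = mat 1 \<and> X ** R = mat 1"
    have "X = (Q ** R) ** X" using QR by simp
    also have "\<dots> = Q ** (R ** X)" by (simp add: matrix_mul_assoc)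
    also have "\<dots> = Q" using X by simp
    finally show "X = Q" .
  qed
  have "det R * det Q = 1" using RQ by (metis det_I det_mul)
  then have dR: "det R = 1" using dQ by simp
  have "conj_SL R A = R ** (A ** Q)" unfolding conj_SL_def inv by (simp add: matrix_mul_assoc)
  also have "\<dots> = (R ** Q) ** MA" using eA by (simp add: matrix_mul_assoc)
  finally have 1: "conj_SL R A = MA" using RQ by simp
  have "conj_SL R B = R ** (B ** Q)" unfolding conj_SL_def inv by (simp add: matrix_mul_assoc)
  also have "\<dots> = (R ** Q) ** MB" using eB by (simp add: matrix_mul_assoc)
  finally have 2: "conj_SL R B = MB" using RQ by simp
  show ?thesis using dR 1 2 by simp
qed

lemma inj_inv:
  fixes h :: "real^4 \<Rightarrow> real^4"
  assumes lh: "linear h" and ih: "inj h"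
  shows "\<exists>R. R ** matrix h = mat 1 \<and> matrix h ** R = mat 1"
proof -
  have "inj ((*v) (matrix h))" using ih lh by (metis matrix_vector_mul(2))
  then obtain R where "R ** matrix h = mat 1" using matrix_left_invertible_injective by blast
  then show ?thesis using matrix_left_right_inverse by blast
qed


lemma e_zero [simp]: "(e3 x) $ 4 = 0" "p3 e4 = 0" "p34 (e12 y) = 0" "p12 (e34 z) = 0" "e4 $ 4 = 1"
  by (simp_all add: vec_eq_iff forall_3 forall_2 e3_def p3_def e4_def p12_def p34_def e12_def e34_def)

lemma e_zero2 [simp]: "e3 0 = 0" "e12 0 = 0" "e34 0 = 0"
  by (simp_all add: vec_eq_iff forall_4 e3_def e12_def e34_def)

lemma p3_scale [simp]: "p3 (t *\<^sub>R e4) = 0" "(t *\<^sub>R e4) $ 4 = t"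
  by (simp_all add: vec_eq_iff forall_3 p3_def e4_def)

lemma embed_i_e3: "embed_i X *v e3 x = e3 (X *v x)"
  by (simp add: embed_i_act)
lemma embed_i_e4: "embed_i X *v (t *\<^sub>R e4) = t *\<^sub>R e4"
  by (simp add: embed_i_act)
lemma embed_j_e12: "embed_j X Y *v e12 x = e12 (X *v x)"
  by (simp add: embed_j_act)
lemma embed_j_e34: "embed_j X Y *v e34 x = e34 (Y *v x)"
  by (simp add: embed_j_act)

lemma embed_i_mult: "embed_i X ** embed_i Y = embed_i (X ** Y)"
  unfolding matrix_eq
  by (simp add: matrix_vector_mul_assoc[symmetric] embed_i_act)

lemma embed_i_one: "embed_i (mat 1) = mat 1"
  unfolding matrix_eq by (simp add: embed_i_act e3_p3)

lemma embed_j_mult: "embed_j X1 Y1 ** embed_j X2 Y2 = embed_j (X1 ** X2) (Y1 ** Y2)"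
  unfolding matrix_eq
  by (simp add: matrix_vector_mul_assoc[symmetric] embed_j_act)

lemma embed_j_one: "embed_j (mat 1) (mat 1) = mat 1"
  unfolding matrix_eq by (simp add: embed_j_act e12_p12)

lemma rep_embed_i:
  assumes "rep_Gamma_SL A' B'"
  shows "rep_Gamma_SL (embed_i A') (embed_i B')"
proof -
  have "embed_i A' ** embed_i A' ** embed_i A' = mat 1"
       "embed_i B' ** embed_i B' ** embed_i B' = mat 1"
       "(embed_i A' ** embed_i B') ** (embed_i A' ** embed_i B') ** (embed_i A' ** embed_i B') = mat 1"
    using assms unfolding rep_Gamma_SL_def by (simp_all add: embed_i_mult embed_i_one)
  then show ?thesis unfolding rep_Gamma_SL_def using det_cube by blast
qed

lemma rep_embed_j:
  assumes "rep_Gamma_SL A1 B1" "rep_Gamma_SL A2 B2"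
  shows "rep_Gamma_SL (embed_j A1 A2) (embed_j B1 B2)"
proof -
  have "embed_j A1 A2 ** embed_j A1 A2 ** embed_j A1 A2 = mat 1"
       "embed_j B1 B2 ** embed_j B1 B2 ** embed_j B1 B2 = mat 1"
       "(embed_j A1 A2 ** embed_j B1 B2) ** (embed_j A1 A2 ** embed_j B1 B2) ** (embed_j A1 A2 ** embed_j B1 B2) = mat 1"
    using assms unfolding rep_Gamma_SL_def by (simp_all add: embed_j_mult embed_j_one)
  then show ?thesis unfolding rep_Gamma_SL_def using det_cube by blast
qed

lemma inj_e: "inj e3" "inj e12" "inj e34"
  by (metis injI p3_e3', metis injI p12_e12, metis injI p34_e34)

lemma ss_embed_i:
  assumes "semisimple_rep A' B'"
  shows "semisimple_rep (embed_i A') (embed_i B')"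
proof -
  let ?A = "embed_i A'" and ?B = "embed_i B'"
  define V2 where "V2 = range (\<lambda>t::real. t *\<^sub>R e4)"
  have sV2: "subspace V2" unfolding V2_def
    by (rule linear_subspace_image[OF _ subspace_UNIV]) (rule linearI, simp_all add: scaleR_add_left)
  have i1: "invariant_subspace ?A ?B (range e3)"
    unfolding invariant_subspace_def
    by (auto simp: linear_subspace_image[OF lin_e3] embed_i_e3)
  have i2: "invariant_subspace ?A ?B V2"
    unfolding invariant_subspace_def V2_def using sV2[unfolded V2_def]
    by (auto simp: embed_i_e4)
  have sum: "{x + y | x y. x \<in> range e3 \<and> y \<in> V2} = UNIV"
  proof -
    have "z \<in> {x + y | x y. x \<in> range e3 \<and> y \<in> V2}" for z
      using e3_p3[of z] unfolding V2_def by (metis (mono_tags, lifting) mem_Collect_eq rangeI)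
    then show ?thesis by blast
  qed
  have s1: "ss_on ?A ?B (range e3)"
    using ss_transport[OF lin_e3 inj_e(1) embed_i_e3 embed_i_e3] assms by blast
  have s2: "ss_on ?A ?B V2"
    by (rule ss_triv[OF sV2]) (auto simp: V2_def embed_i_e4)
  show ?thesis by (rule ss_sum[OF i1 i2 sum s1 s2])
qed

lemma ss_embed_j:
  assumes "semisimple_rep A1 B1" "semisimple_rep A2 B2"
  shows "semisimple_rep (embed_j A1 A2) (embed_j B1 B2)"
proof -
  let ?A = "embed_j A1 A2" and ?B = "embed_j B1 B2"
  have i1: "invariant_subspace ?A ?B (range e12)"
    unfolding invariant_subspace_def
    by (auto simp: linear_subspace_image[OF lin_e12] embed_j_e12)
  have i2: "invariant_subspace ?A ?B (range e34)"
    unfolding invariant_subspace_def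
    by (auto simp: linear_subspace_image[OF lin_e34] embed_j_e34)
  have sum: "{x + y | x y. x \<in> range e12 \<and> y \<in> range e34} = UNIV"
  proof -
    have "z \<in> {x + y | x y. x \<in> range e12 \<and> y \<in> range e34}" for z
      using e12_p12[of z] by (metis (mono_tags, lifting) mem_Collect_eq rangeI)
    then show ?thesis by blast
  qed
  have s1: "ss_on ?A ?B (range e12)"
    using ss_transport[OF lin_e12 inj_e(2) embed_j_e12 embed_j_e12] assms(1) by blast
  have s2: "ss_on ?A ?B (range e34)"
    using ss_transport[OF lin_e34 inj_e(3) embed_j_e34 embed_j_e34] assms(2) by blast
  show ?thesis by (rule ss_sum[OF i1 i2 sum s1 s2])
qed


lemma constr_i:
  fixes A :: "real^4^4" and f :: "real^3 \<Rightarrow> real^4" and g :: "real^4 \<Rightarrow> real^3"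
  assumes lf: "linear f" and lg: "linear g" and gf: "\<And>x. g (f x) = x"
    and fW: "\<And>x. f x \<in> W" and fg: "\<And>y. y \<in> W \<Longrightarrow> f (g y) = y"
    and AW: "\<And>y. y \<in> W \<Longrightarrow> A *v y \<in> W" and Av: "A *v v = v"
  shows "A ** matrix (\<lambda>y. f (p3 y) + (y$4) *\<^sub>R v) =
         matrix (\<lambda>y. f (p3 y) + (y$4) *\<^sub>R v) ** embed_i (matrix (\<lambda>x. g (A *v f x)))"
    and "\<And>x. A *v f x = f (matrix (\<lambda>x. g (A *v f x)) *v x)"
proof -
  define h where "h = (\<lambda>y. f (p3 y) + (y$4) *\<^sub>R v)"
  define A' where "A' = matrix (\<lambda>x. g (A *v f x))"
  have lh: "linear h" unfolding h_def
    by (rule linearI) (simp_all add: linear_add[OF lf] linear_add[OF lin_p3] linear_scale[OF lf] linear_scale[OF lin_p3] algebra_simps scaleR_add_left)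
  have lk: "linear (\<lambda>x. g (A *v f x))"
    by (rule linearI) (simp_all add: linear_add[OF lf] linear_add[OF lg] linear_scale[OF lf] linear_scale[OF lg] matrix_vector_right_distrib matrix_vector_mult_scaleR)
  have Mk: "A' *v x = g (A *v f x)" for x
    unfolding A'_def using fun_cong[OF matrix_vector_mul(2)[OF lk]] by simp
  have fA: "A *v f x = f (A' *v x)" for x
  proof -
    have "A *v f x \<in> W" using AW fW by blast
    then have "f (g (A *v f x)) = A *v f x" by (rule fg)
    then show ?thesis by (simp only: Mk)
  qed
  then show "\<And>x. A *v f x = f (matrix (\<lambda>x. g (A *v f x)) *v x)" unfolding A'_def .
  have "A *v h y = h (embed_i A' *v y)" for y
  proof -
    have "A *v h y = A *v f (p3 y) + (y$4) *\<^sub>R (A *v v)"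
      unfolding h_def by (simp only: matrix_vector_right_distrib matrix_vector_mult_scaleR)
    also have "\<dots> = f (A' *v p3 y) + (y$4) *\<^sub>R v" by (simp only: fA Av)
    also have "\<dots> = h (embed_i A' *v y)" unfolding h_def embed_i_act by simp
    finally show ?thesis .
  qed
  then have "A ** matrix h = matrix h ** embed_i A'"
    unfolding matrix_eq
    by (simp add: matrix_vector_mul_assoc[symmetric] fun_cong[OF matrix_vector_mul(2)[OF lh]])
  then show "A ** matrix (\<lambda>y. f (p3 y) + (y$4) *\<^sub>R v) =
         matrix (\<lambda>y. f (p3 y) + (y$4) *\<^sub>R v) ** embed_i (matrix (\<lambda>x. g (A *v f x)))"
    unfolding h_def A'_def .
qed

lemma constr_j:
  fixes A :: "real^4^4" and f1 f2 :: "real^2 \<Rightarrow> real^4" and g1 g2 :: "real^4 \<Rightarrow> real^2"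
  assumes lf1: "linear f1" and lg1: "linear g1"
    and fV: "\<And>x. f1 x \<in> V" and fg1: "\<And>y. y \<in> V \<Longrightarrow> f1 (g1 y) = y"
    and lf2: "linear f2" and lg2: "linear g2"
    and fW: "\<And>x. f2 x \<in> W" and fg2: "\<And>y. y \<in> W \<Longrightarrow> f2 (g2 y) = y"
    and AV: "\<And>y. y \<in> V \<Longrightarrow> A *v y \<in> V" and AW: "\<And>y. y \<in> W \<Longrightarrow> A *v y \<in> W"
  shows "A ** matrix (\<lambda>y. f1 (p12 y) + f2 (p34 y)) =
         matrix (\<lambda>y. f1 (p12 y) + f2 (p34 y)) ** embed_j (matrix (\<lambda>x. g1 (A *v f1 x))) (matrix (\<lambda>x. g2 (A *v f2 x)))"
    and "\<And>x. A *v f1 x = f1 (matrix (\<lambda>x. g1 (A *v f1 x)) *v x)"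
    and "\<And>x. A *v f2 x = f2 (matrix (\<lambda>x. g2 (A *v f2 x)) *v x)"
proof -
  define h where "h = (\<lambda>y. f1 (p12 y) + f2 (p34 y))"
  define A1 where "A1 = matrix (\<lambda>x. g1 (A *v f1 x))"
  define A2 where "A2 = matrix (\<lambda>x. g2 (A *v f2 x))"
  have lh: "linear h" unfolding h_def
    by (rule linearI) (simp_all add: linear_add[OF lf1] linear_add[OF lin_p12] linear_scale[OF lf1] linear_scale[OF lin_p12]
        linear_add[OF lf2] linear_add[OF lin_p34] linear_scale[OF lf2] linear_scale[OF lin_p34] algebra_simps)
  have lk1: "linear (\<lambda>x. g1 (A *v f1 x))"
    by (rule linearI) (simp_all add: linear_add[OF lf1] linear_add[OF lg1] linear_scale[OF lf1] linear_scale[OF lg1] matrix_vector_right_distrib matrix_vector_mult_scaleR)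
  have lk2: "linear (\<lambda>x. g2 (A *v f2 x))"
    by (rule linearI) (simp_all add: linear_add[OF lf2] linear_add[OF lg2] linear_scale[OF lf2] linear_scale[OF lg2] matrix_vector_right_distrib matrix_vector_mult_scaleR)
  have Mk1: "A1 *v x = g1 (A *v f1 x)" for x
    unfolding A1_def using fun_cong[OF matrix_vector_mul(2)[OF lk1]] by simp
  have Mk2: "A2 *v x = g2 (A *v f2 x)" for x
    unfolding A2_def using fun_cong[OF matrix_vector_mul(2)[OF lk2]] by simp
  have fA1: "A *v f1 x = f1 (A1 *v x)" for x
  proof -
    have "A *v f1 x \<in> V" using AV fV by blast
    then have "f1 (g1 (A *v f1 x)) = A *v f1 x" by (rule fg1)
    then show ?thesis by (simp only: Mk1)
  qed
  have fA2: "A *v f2 x = f2 (A2 *v x)" for x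
  proof -
    have "A *v f2 x \<in> W" using AW fW by blast
    then have "f2 (g2 (A *v f2 x)) = A *v f2 x" by (rule fg2)
    then show ?thesis by (simp only: Mk2)
  qed
  show "\<And>x. A *v f1 x = f1 (matrix (\<lambda>x. g1 (A *v f1 x)) *v x)" using fA1 unfolding A1_def .
  show "\<And>x. A *v f2 x = f2 (matrix (\<lambda>x. g2 (A *v f2 x)) *v x)" using fA2 unfolding A2_def .
  have "A *v h y = h (embed_j A1 A2 *v y)" for y
  proof -
    have "A *v h y = A *v f1 (p12 y) + A *v f2 (p34 y)"
      unfolding h_def by (simp only: matrix_vector_right_distrib)
    also have "\<dots> = f1 (A1 *v p12 y) + f2 (A2 *v p34 y)" by (simp only: fA1 fA2)
    also have "\<dots> = h (embed_j A1 A2 *v y)" unfolding h_def embed_j_act by simp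
    finally show ?thesis .
  qed
  then have "A ** matrix h = matrix h ** embed_j A1 A2"
    unfolding matrix_eq
    by (simp add: matrix_vector_mul_assoc[symmetric] fun_cong[OF matrix_vector_mul(2)[OF lh]])
  then show "A ** matrix (\<lambda>y. f1 (p12 y) + f2 (p34 y)) =
         matrix (\<lambda>y. f1 (p12 y) + f2 (p34 y)) ** embed_j (matrix (\<lambda>x. g1 (A *v f1 x))) (matrix (\<lambda>x. g2 (A *v f2 x)))"
    unfolding h_def A1_def A2_def .
qed


lemma iso_exists:
  fixes W :: "(real^'n) set"
  assumes sW: "subspace W" and d: "dim W = CARD('m)"
  obtains f :: "real^'m \<Rightarrow> real^'n" and g where "linear f" "linear g" "\<And>x. g (f x) = x"
    "\<And>x. f x \<in> W" "\<And>y. y \<in> W \<Longrightarrow> f (g y) = y" "range f = W" "inj f"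
proof -
  have "dim (UNIV :: (real^'m) set) = dim W" using d by simp
  then obtain f g where fg: "linear f" "linear g" "f ` (UNIV :: (real^'m) set) = W" "g ` W = UNIV"
    "\<And>x. g (f x) = x" "\<And>y. y \<in> W \<Longrightarrow> f (g y) = y"
    using isometries_subspaces[OF subspace_UNIV sW] by (metis UNIV_I)
  have "inj f" by (metis fg(5) injI)
  then show ?thesis using that fg by blast
qed

lemma ss_range:
  fixes A B :: "real^'n^'n" and A' B' :: "real^'m^'m" and f :: "real^'m \<Rightarrow> real^'n"
  assumes ss: "semisimple_rep A B" and iW: "invariant_subspace A B W"
    and lf: "linear f" and inf: "inj f" and rf: "range f = W"
    and fA: "\<And>x. A *v f x = f (A' *v x)" and fB: "\<And>x. B *v f x = f (B' *v x)"
  shows "semisimple_rep A' B'"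
proof -
  have "ss_on A B W" using ss_sub[OF ss[unfolded ss_UNIV] iW] .
  then show ?thesis using ss_transport[OF lf inf fA fB] rf by simp
qed

lemma eig1:
  fixes M :: "real^4^4"
  assumes c: "\<And>x. M *v (M *v (M *v x)) = x" and v: "v \<noteq> 0" and Mv: "M *v v = k *\<^sub>R v"
  shows "k = 1"
proof -
  have "M *v (M *v (M *v v)) = (k * k * k) *\<^sub>R v" using Mv by (simp add: matrix_vector_mult_scaleR)
  then have "(k * k * k) *\<^sub>R v = 1 *\<^sub>R v" using c by simp
  then have "k * k * k = 1" using v by (metis scaleR_cancel_right)
  then show ?thesis by (rule real_cube_one)
qed

lemma small_dims:
  fixes A B :: "real^4^4"
  assumes r: "rep_Gamma_SL A B" and ss: "semisimple_rep A B"
  shows "\<exists>V W. invariant_subspace A B V \<and> invariant_subspace A B W \<and> V \<inter> W = {0} \<and>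
     {v + w | v w. v \<in> V \<and> w \<in> W} = UNIV \<and> (dim V = 1 \<or> dim V = 2) \<and> dim V + dim W = 4"
proof -
  obtain U where U: "invariant_subspace A B U" "U \<noteq> {0}" "U \<noteq> UNIV" using red_mat[OF r] by blast
  obtain C where C: "invariant_subspace A B C" "U \<inter> C = {0}" "{u + w | u w. u \<in> U \<and> w \<in> C} = UNIV"
    using ss[unfolded semisimple_rep_def, rule_format, OF U(1)] by blast
  have sU: "subspace U" and sC: "subspace C" using U(1) C(1) by (auto simp: invariant_subspace_def)
  have dsum: "dim U + dim C = 4"
  proof -
    have "dim {u + w | u w. u \<in> U \<and> w \<in> C} + dim (U \<inter> C) = dim U + dim C" by (rule dim_sums_Int[OF sU sC])
    then show ?thesis using C(2,3) by simp
  qed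
  have d0: "dim U \<noteq> 0"
  proof
    assume "dim U = 0"
    then have "U \<subseteq> {0}" using dim_eq_0[THEN iffD1] by blast
    moreover have "0 \<in> U" using sU by (simp add: subspace_0)
    ultimately show False using U(2) by blast
  qed
  have d4: "dim U \<noteq> 4"
  proof
    assume "dim U = 4"
    then have "span U = UNIV" using dim_eq_full[of U] by simp
    then show False using U(3) sU by (metis span_eq_iff)
  qed
  have sum2: "{w + u | w u. w \<in> C \<and> u \<in> U} = UNIV"
  proof -
    have "z \<in> {w + u | w u. w \<in> C \<and> u \<in> U}" for z
    proof -
      obtain u w where "z = u + w" "u \<in> U" "w \<in> C" using C(3) by blast
      then have "z = w + u" "w \<in> C" "u \<in> U" by (simp_all add: add.commute)
      then show ?thesis by blast
    qed
    then show ?thesis by blast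
  qed
  show ?thesis
  proof (cases "dim U \<le> 2")
    case True
    then have "dim U = 1 \<or> dim U = 2" using d0 by linarith
    then show ?thesis using U(1) C dsum by (rule_tac exI[of _ U], rule_tac exI[of _ C]) auto
  next
    case False
    then have "dim C = 1" using dsum d4 by linarith
    moreover have "C \<inter> U = {0}" using C(2) by blast
    ultimately show ?thesis using U(1) C(1) sum2 dsum by (rule_tac exI[of _ C], rule_tac exI[of _ U]) auto
  qed
qed


lemma dim_single: "v \<noteq> 0 \<Longrightarrow> dim {v} = 1"
proof -
  assume v: "v \<noteq> 0"
  have "independent {v}" using independent_insertI[of v "{}"] independent_empty v by simp
  then have "dim (span {v}) = card {v}" by (rule dim_span_eq_card_independent)
  then show ?thesis by simp
qed

lemma case_i:
  fixes A B :: "real^4^4"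
  assumes r: "rep_Gamma_SL A B" and ss: "semisimple_rep A B"
    and iV: "invariant_subspace A B V" and iW: "invariant_subspace A B W"
    and VW: "V \<inter> W = {0}" and dV: "dim V = 1" and dW: "dim W = 3"
  shows "\<exists>P::real^4^4. det P = 1 \<and> (\<exists>A' B' :: real^3^3.
                 rep_Gamma_SL A' B' \<and> semisimple_rep A' B' \<and>
                 conj_SL P A = embed_i A' \<and> conj_SL P B = embed_i B')"
proof -
  note rf = rep_facts[OF r]
  have sV: "subspace V" and sW: "subspace W" using iV iW by (auto simp: invariant_subspace_def)
  have AV: "\<And>y. y \<in> V \<Longrightarrow> A *v y \<in> V" "\<And>y. y \<in> V \<Longrightarrow> B *v y \<in> V"
    and AW: "\<And>y. y \<in> W \<Longrightarrow> A *v y \<in> W" "\<And>y. y \<in> W \<Longrightarrow> B *v y \<in> W"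
    using iV iW by (auto simp: invariant_subspace_def)
  have "\<not> V \<subseteq> {0}" using dV dim_eq_0[of V] by (metis zero_neq_one)
  then obtain v where v: "v \<in> V" "v \<noteq> 0" by auto
  have "span {v} = span V" using v dV dim_single[OF v(2)] by (intro dim_eq_span) auto
  moreover have "span V = V" using sV by (metis span_eq_iff)
  ultimately have Vv: "V = range (\<lambda>k. k *\<^sub>R v)" by (simp add: span_singleton)
  have fixv: "A *v v = v \<and> B *v v = v"
  proof -
    obtain k where k: "A *v v = k *\<^sub>R v" using AV(1)[OF v(1)] Vv by auto
    obtain l where l: "B *v v = l *\<^sub>R v" using AV(2)[OF v(1)] Vv by auto
    have "k = 1" by (rule eig1[OF rf(1) v(2) k])
    moreover have "l = 1" by (rule eig1[OF rf(2) v(2) l])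
    ultimately show ?thesis using k l by simp
  qed
  obtain f :: "real^3 \<Rightarrow> real^4" and g where fg: "linear f" "linear g" "\<And>x. g (f x) = x"
    "\<And>x. f x \<in> W" "\<And>y. y \<in> W \<Longrightarrow> f (g y) = y" "range f = W" "inj f"
    using iso_exists[OF sW, where 'm=3] dW by auto
  define h where "h = (\<lambda>u y. f (p3 y) + (y$4) *\<^sub>R u)"
  have lh: "linear (h u)" for u unfolding h_def
    by (rule linearI) (simp_all add: linear_add[OF fg(1)] linear_add[OF lin_p3] linear_scale[OF fg(1)] linear_scale[OF lin_p3] algebra_simps scaleR_add_left)
  have ih: "inj (h u)" if u: "u \<in> V" "u \<noteq> 0" for u
    unfolding linear_inj_iff_eq_0[OF lh]
  proof (intro allI impI)
    fix y assume "h u y = 0"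
    then have e: "f (p3 y) = - ((y$4) *\<^sub>R u)" by (simp add: h_def eq_neg_iff_add_eq_0)
    have "- ((y$4) *\<^sub>R u) \<in> V" using u sV by (simp add: subspace_neg subspace_scale)
    then have "f (p3 y) \<in> V \<inter> W" using fg(4)[of "p3 y"] by (simp only: e IntI)
    then have f0: "f (p3 y) = 0" using VW by auto
    then have "p3 y = 0" using fg(3)[of "p3 y"] fg(2) by (simp add: linear_0)
    moreover have "y$4 = 0" using e f0 u(2) by simp
    ultimately show "y = 0" using e3_p3[of y] by simp
  qed
  obtain R1 where R1: "R1 ** matrix (h v) = mat 1" using inj_inv[OF lh ih[OF v]] by blast
  define d where "d = det (matrix (h v))"
  have "det R1 * d = 1" using R1 unfolding d_def by (metis det_I det_mul)
  then have d0: "d \<noteq> 0" by auto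
  define c where "c = 1 / d"
  define u where "u = c *\<^sub>R v"
  have u: "u \<in> V" "u \<noteq> 0" using v d0 sV by (simp_all add: u_def c_def subspace_scale)
  have fixu: "A *v u = u" "B *v u = u" using fixv by (simp_all add: u_def matrix_vector_mult_scaleR)
  have "h u = h v \<circ> (\<lambda>y. Dc c *v y)"
    by (rule ext) (simp add: h_def u_def Dc_act)
  then have "matrix (h u) = matrix (h v) ** Dc c"
    using matrix_compose[OF matrix_vector_mul_linear lh[of v]] by simp
  then have dQ: "det (matrix (h u)) = 1" using d0 by (simp add: det_mul det_Dc d_def[symmetric] c_def)
  obtain R where R: "R ** matrix (h u) = mat 1" "matrix (h u) ** R = mat 1" using inj_inv[OF lh ih[OF u]] by blast
  define A' where "A' = matrix (\<lambda>x. g (A *v f x))"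
  define B' where "B' = matrix (\<lambda>x. g (B *v f x))"
  note cA0 = constr_i[OF fg(1-5) AW(1) fixu(1)]
  have cA1: "A ** matrix (h u) = matrix (h u) ** embed_i A'"
    unfolding h_def A'_def by (rule cA0(1))
  have cA2: "\<And>x. A *v f x = f (A' *v x)"
    unfolding A'_def by (rule cA0(2))
  note cA = cA1 cA2
  note cB0 = constr_i[OF fg(1-5) AW(2) fixu(2)]
  have cB1: "B ** matrix (h u) = matrix (h u) ** embed_i B'"
    unfolding h_def B'_def by (rule cB0(1))
  have cB2: "\<And>x. B *v f x = f (B' *v x)"
    unfolding B'_def by (rule cB0(2))
  note cB = cB1 cB2
  have fin: "det R = 1 \<and> conj_SL R A = embed_i A' \<and> conj_SL R B = embed_i B'"
    by (rule finish[OF R dQ cA(1) cB(1)])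
  have rep': "rep_Gamma_SL A' B'" by (rule block_rep[OF fg(1) fg(7) cA(2) cB(2) r])
  have ss': "semisimple_rep A' B'" by (rule ss_range[OF ss iW fg(1) fg(7) fg(6) cA(2) cB(2)])
  show ?thesis using fin rep' ss' by blast
qed


lemma vec2_eta: "vector [z$1, z$2] = (z::real^2)"
  by (simp add: vec_eq_iff forall_2)

lemma p34c: "(p34 y) $ 1 = y $ 3" "(p34 y) $ 2 = y $ 4"
  by (simp_all add: p34_def)

lemma case_j:
  fixes A B :: "real^4^4"
  assumes r: "rep_Gamma_SL A B" and ss: "semisimple_rep A B"
    and iV: "invariant_subspace A B V" and iW: "invariant_subspace A B W"
    and VW: "V \<inter> W = {0}" and dV: "dim V = 2" and dW: "dim W = 2"
  shows "\<exists>P::real^4^4. det P = 1 \<and> (\<exists>A1 B1 A2 B2 :: real^2^2.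
                 rep_Gamma_SL A1 B1 \<and> semisimple_rep A1 B1 \<and>
                 rep_Gamma_SL A2 B2 \<and> semisimple_rep A2 B2 \<and>
                 conj_SL P A = embed_j A1 A2 \<and> conj_SL P B = embed_j B1 B2)"
proof -
  have sV: "subspace V" and sW: "subspace W" using iV iW by (auto simp: invariant_subspace_def)
  have AV: "\<And>y. y \<in> V \<Longrightarrow> A *v y \<in> V" "\<And>y. y \<in> V \<Longrightarrow> B *v y \<in> V"
    and AW: "\<And>y. y \<in> W \<Longrightarrow> A *v y \<in> W" "\<And>y. y \<in> W \<Longrightarrow> B *v y \<in> W"
    using iV iW by (auto simp: invariant_subspace_def)
  obtain f1 :: "real^2 \<Rightarrow> real^4" and g1 where f1: "linear f1" "linear g1" "\<And>x. g1 (f1 x) = x"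
    "\<And>x. f1 x \<in> V" "\<And>y. y \<in> V \<Longrightarrow> f1 (g1 y) = y" "range f1 = V" "inj f1"
    using iso_exists[OF sV, where 'm=2] dV by auto
  obtain f2 :: "real^2 \<Rightarrow> real^4" and g2 where f2: "linear f2" "linear g2" "\<And>x. g2 (f2 x) = x"
    "\<And>x. f2 x \<in> W" "\<And>y. y \<in> W \<Longrightarrow> f2 (g2 y) = y" "range f2 = W" "inj f2"
    using iso_exists[OF sW, where 'm=2] dW by auto
  define hh where "hh = (\<lambda>(F::real^2 \<Rightarrow> real^4) y. f1 (p12 y) + F (p34 y))"
  have lh: "linear (hh F)" if lF: "linear F" for F unfolding hh_def
    by (rule linearI) (simp_all add: linear_add[OF f1(1)] linear_add[OF lin_p12] linear_scale[OF f1(1)] linear_scale[OF lin_p12]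
        linear_add[OF lF] linear_add[OF lin_p34] linear_scale[OF lF] linear_scale[OF lin_p34] algebra_simps)
  have ih: "inj (hh F)" if lF: "linear F" and FW: "\<And>x. F x \<in> W" and iF: "\<And>x. F x = 0 \<Longrightarrow> x = 0" for F
    unfolding linear_inj_iff_eq_0[OF lh[OF lF]]
  proof (intro allI impI)
    fix y assume "hh F y = 0"
    then have e: "f1 (p12 y) = - F (p34 y)" by (simp add: hh_def eq_neg_iff_add_eq_0)
    have "- F (p34 y) \<in> W" using FW sW by (simp add: subspace_neg)
    then have "f1 (p12 y) \<in> V \<inter> W" using f1(4)[of "p12 y"] by (simp only: e IntI)
    then have z1: "f1 (p12 y) = 0" using VW by auto
    then have "p12 y = 0" using f1(3)[of "p12 y"] f1(2) by (simp add: linear_0)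
    moreover have "p34 y = 0" using e z1 iF by simp
    ultimately show "y = 0" using e12_p12[of y] by simp
  qed
  have i2: "\<And>x. f2 x = 0 \<Longrightarrow> x = 0" using f2(3) f2(2) by (metis linear_0)
  obtain R1 where R1: "R1 ** matrix (hh f2) = mat 1" using inj_inv[OF lh[OF f2(1)] ih[OF f2(1) f2(4) i2]] by blast
  define d where "d = det (matrix (hh f2))"
  have "det R1 * d = 1" using R1 unfolding d_def by (metis det_I det_mul)
  then have d0: "d \<noteq> 0" by auto
  define c where "c = 1 / d"
  have c0: "c \<noteq> 0" using d0 by (simp add: c_def)
  define f2c where "f2c = (\<lambda>z::real^2. f2 (vector [z$1, c * z$2]))"
  define g2c where "g2c = (\<lambda>w. vector [(g2 w)$1, (g2 w)$2 / c] :: real^2)"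
  have ls: "linear (\<lambda>z::real^2. vector [z$1, c * z$2] :: real^2)"
    by (rule linearI) (simp_all add: vec_eq_iff forall_2 algebra_simps)
  have lf2c: "linear f2c" unfolding f2c_def
    using linear_compose[OF ls f2(1)] by (simp add: o_def)
  have lg2c: "linear g2c" unfolding g2c_def
    by (rule linearI) (simp_all add: linear_add[OF f2(2)] linear_scale[OF f2(2)] vec_eq_iff forall_2 add_divide_distrib)
  have gf2c: "\<And>x. g2c (f2c x) = x" unfolding f2c_def g2c_def using c0 by (simp add: f2(3) vec_eq_iff forall_2)
  have f2cW: "\<And>x. f2c x \<in> W" unfolding f2c_def by (rule f2(4))
  have fg2c: "\<And>y. y \<in> W \<Longrightarrow> f2c (g2c y) = y" unfolding f2c_def g2c_def using c0 by (simp add: f2(5) vec2_eta)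
  have rf2c: "range f2c = W"
  proof
    show "range f2c \<subseteq> W" using f2cW by auto
    show "W \<subseteq> range f2c" using fg2c by (metis image_eqI subsetI UNIV_I)
  qed
  have if2c: "inj f2c" by (metis gf2c injI)
  have i2c: "\<And>x. f2c x = 0 \<Longrightarrow> x = 0" using gf2c lg2c by (metis linear_0)
  have "hh f2c = hh f2 \<circ> (\<lambda>y. Dc c *v y)"
    by (rule ext) (simp add: hh_def f2c_def Dc_act p34c)
  then have "matrix (hh f2c) = matrix (hh f2) ** Dc c"
    using matrix_compose[OF matrix_vector_mul_linear lh[OF f2(1)]] by simp
  then have dQ: "det (matrix (hh f2c)) = 1" using d0 by (simp add: det_mul det_Dc d_def[symmetric] c_def)
  obtain R where R: "R ** matrix (hh f2c) = mat 1" "matrix (hh f2c) ** R = mat 1"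
    using inj_inv[OF lh[OF lf2c] ih[OF lf2c f2cW i2c]] by blast
  define A1 where "A1 = matrix (\<lambda>x. g1 (A *v f1 x))"
  define A2 where "A2 = matrix (\<lambda>x. g2c (A *v f2c x))"
  define B1 where "B1 = matrix (\<lambda>x. g1 (B *v f1 x))"
  define B2 where "B2 = matrix (\<lambda>x. g2c (B *v f2c x))"
  note cA0 = constr_j[OF f1(1,2,4,5) lf2c lg2c f2cW fg2c AV(1) AW(1)]
  note cB0 = constr_j[OF f1(1,2,4,5) lf2c lg2c f2cW fg2c AV(2) AW(2)]
  have cA1: "A ** matrix (hh f2c) = matrix (hh f2c) ** embed_j A1 A2"
    unfolding hh_def A1_def A2_def by (rule cA0(1))
  have cB1: "B ** matrix (hh f2c) = matrix (hh f2c) ** embed_j B1 B2"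
    unfolding hh_def B1_def B2_def by (rule cB0(1))
  have cA2: "\<And>x. A *v f1 x = f1 (A1 *v x)" unfolding A1_def by (rule cA0(2))
  have cA3: "\<And>x. A *v f2c x = f2c (A2 *v x)" unfolding A2_def by (rule cA0(3))
  have cB2: "\<And>x. B *v f1 x = f1 (B1 *v x)" unfolding B1_def by (rule cB0(2))
  have cB3: "\<And>x. B *v f2c x = f2c (B2 *v x)" unfolding B2_def by (rule cB0(3))
  have fin: "det R = 1 \<and> conj_SL R A = embed_j A1 A2 \<and> conj_SL R B = embed_j B1 B2"
    by (rule finish[OF R dQ cA1 cB1])
  have r1: "rep_Gamma_SL A1 B1" by (rule block_rep[OF f1(1) f1(7) cA2 cB2 r])
  have r2: "rep_Gamma_SL A2 B2" by (rule block_rep[OF lf2c if2c cA3 cB3 r])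
  have s1: "semisimple_rep A1 B1" by (rule ss_range[OF ss iV f1(1) f1(7) f1(6) cA2 cB2])
  have s2: "semisimple_rep A2 B2" by (rule ss_range[OF ss iW lf2c if2c rf2c cA3 cB3])
  show ?thesis using fin r1 r2 s1 s2 by blast
qed


theorem proposition4p4:
  shows "(\<forall>(A::real^4^4) B. rep_Gamma_SL A B \<and> semisimple_rep A B \<longrightarrow>
            \<not> irreducible_rep A B
          \<and> (\<exists>V. invariant_subspace A B V \<and> (dim V = 1 \<or> dim V = 2))
          \<and> ((\<exists>P::real^4^4. det P = 1 \<and> (\<exists>A' B' :: real^3^3.
                 rep_Gamma_SL A' B' \<and> semisimple_rep A' B' \<and>
                 conj_SL P A = embed_i A' \<and> conj_SL P B = embed_i B'))
            \<or> (\<exists>P::real^4^4. det P = 1 \<and> (\<exists>A1 B1 A2 B2 :: real^2^2.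
                 rep_Gamma_SL A1 B1 \<and> semisimple_rep A1 B1 \<and>
                 rep_Gamma_SL A2 B2 \<and> semisimple_rep A2 B2 \<and>
                 conj_SL P A = embed_j A1 A2 \<and> conj_SL P B = embed_j B1 B2))))
       \<and> (\<forall>A' B' :: real^3^3. rep_Gamma_SL A' B' \<and> semisimple_rep A' B' \<longrightarrow>
            rep_Gamma_SL (embed_i A') (embed_i B') \<and> semisimple_rep (embed_i A') (embed_i B'))
       \<and> (\<forall>A1 B1 A2 B2 :: real^2^2.
            rep_Gamma_SL A1 B1 \<and> semisimple_rep A1 B1 \<and> rep_Gamma_SL A2 B2 \<and> semisimple_rep A2 B2 \<longrightarrow>
            rep_Gamma_SL (embed_j A1 A2) (embed_j B1 B2) \<and> semisimple_rep (embed_j A1 A2) (embed_j B1 B2))"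
proof (intro conjI allI impI)
  fix A B :: "real^4^4"
  assume h: "rep_Gamma_SL A B \<and> semisimple_rep A B"
  then have r: "rep_Gamma_SL A B" and ss: "semisimple_rep A B" by auto
  obtain V W where VW: "invariant_subspace A B V" "invariant_subspace A B W" "V \<inter> W = {0}"
    "{v + w | v w. v \<in> V \<and> w \<in> W} = UNIV" "dim V = 1 \<or> dim V = 2" "dim V + dim W = 4"
    using small_dims[OF r ss] by blast
  show "\<not> irreducible_rep A B"
  proof
    assume "irreducible_rep A B"
    then have "V = {0} \<or> V = UNIV" using VW(1) unfolding irreducible_rep_def by blast
    then have "dim V = 0 \<or> dim V = 4" by auto
    then show False using VW(5) by arith
  qed
  show "\<exists>V. invariant_subspace A B V \<and> (dim V = 1 \<or> dim V = 2)" using VW(1,5) by blast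
  show "(\<exists>P::real^4^4. det P = 1 \<and> (\<exists>A' B' :: real^3^3.
                 rep_Gamma_SL A' B' \<and> semisimple_rep A' B' \<and>
                 conj_SL P A = embed_i A' \<and> conj_SL P B = embed_i B'))
            \<or> (\<exists>P::real^4^4. det P = 1 \<and> (\<exists>A1 B1 A2 B2 :: real^2^2.
                 rep_Gamma_SL A1 B1 \<and> semisimple_rep A1 B1 \<and>
                 rep_Gamma_SL A2 B2 \<and> semisimple_rep A2 B2 \<and>
                 conj_SL P A = embed_j A1 A2 \<and> conj_SL P B = embed_j B1 B2))"
  proof (cases "dim V = 1")
    case True
    then have "dim W = 3" using VW(6) by simp
    then show ?thesis using case_i[OF r ss VW(1,2,3) True] by blast
  next
    case False
    then have d2: "dim V = 2" "dim W = 2" using VW(5,6) by auto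
    show ?thesis using case_j[OF r ss VW(1,2,3) d2] by blast
  qed
next
  fix A' B' :: "real^3^3"
  assume "rep_Gamma_SL A' B' \<and> semisimple_rep A' B'"
  then show "rep_Gamma_SL (embed_i A') (embed_i B')" using rep_embed_i by blast
next
  fix A' B' :: "real^3^3"
  assume "rep_Gamma_SL A' B' \<and> semisimple_rep A' B'"
  then show "semisimple_rep (embed_i A') (embed_i B')" using ss_embed_i by blast
next
  fix A1 B1 A2 B2 :: "real^2^2"
  assume "rep_Gamma_SL A1 B1 \<and> semisimple_rep A1 B1 \<and> rep_Gamma_SL A2 B2 \<and> semisimple_rep A2 B2"
  then show "rep_Gamma_SL (embed_j A1 A2) (embed_j B1 B2)" using rep_embed_j by blast
next
  fix A1 B1 A2 B2 :: "real^2^2"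
  assume "rep_Gamma_SL A1 B1 \<and> semisimple_rep A1 B1 \<and> rep_Gamma_SL A2 B2 \<and> semisimple_rep A2 B2"
  then show "semisimple_rep (embed_j A1 A2) (embed_j B1 B2)" using ss_embed_j by blast
qed


end
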